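(* Let $C\subseteq\mathbb{F}_q^{2n}$ be a symplectic self-orthogonal $\mathbb F_q$-linear code with stabilizer code $Q(C)$, and let $\emptyset\neq I\subsetneq J\subseteq\{1,\dots,n\}$. If $|J|\geq n-\mathrm{swt}(C^{\perp_s})+|I|+1$, then $Q(C)$ is $(I,J)$-locally recoverable.
   Context: $q$ is a power of a prime $p$. Vectors of $\mathbb{F}_q^{2n}$ are written $(\mathbf a|\mathbf b)$, coordinate pair $(a_j,b_j)$ indexed by $j\in\{1,\dots,n\}$. Symplectic form $(\mathbf a|\mathbf b)\cdot_s(\mathbf c|\mathbf d)=\mathbf a\cdot\mathbf d-\mathbf b\cdot\mathbf c$; $C^{\perp_s}$ its dual; $C$ symplectic self-orthogonal if $C\subseteq C^{\perp_s}$. The symplectic weight of $(\mathbf a|\mathbf b)$ is $\#\{j:(a_j,b_j)\ne(0,0)\}$, and $\mathrm{swt}(D)$ is the minimum symplectic weight of a nonzero vector of $D$. Quantum setting: $\xi=e^{2\pi\iota/p}$; $X(a)|x\rangle=|x+a\rangle$, $Z(b)|x\rangle=\xi^{\mathrm{tr}_{q/p}(bx)}|x\rangle$ on $\mathbb C^q$; $E_{(\mathbf a,\mathbf b)}=\bigotimes_jX(a_j)Z(b_j)$. $Q(C)\subseteq\mathbb C^{q^n}$ is the common eigenspace $\{v:Ev=\lambda(E)v\ \forall E\in S\}$, $S$ the commutative group generated by scalars $\xi^\ell\mathcal I$ and $E_{\mathbf y}$, $\mathbf y\in C$, $\lambda$ a character with $\lambda(\xi\mathcal I)=\xi$. Let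 $\Gamma(\rho)=q^{-2}\sum_{a,b}X(a)Z(b)\rho(X(a)Z(b))^\dagger$, and $\Gamma^I$ apply $\Gamma$ to the qudits indexed by $I$, identity elsewhere. $Q$ is $(I,J)$-locally recoverable if there is a trace-preserving quantum operation $\mathcal R$ acting only on the qudits indexed by $J$ with $\mathcal R\circ\Gamma^I(|\varphi\rangle\langle\varphi|)=|\varphi\rangle\langle\varphi|$ for all $|\varphi\rangle\in Q$. *)

theory Defs
  imports Complex_Main "HOL-Library.Cardinality"
begin

definition field_degree :: "'a::{finite,field} itself \<Rightarrow> nat" where
  "field_degree _ = (THE m. CARD('a) = CHAR('a) ^ m)"

definition field_trace :: "'a::{finite,field} \<Rightarrow> 'a" where
  "field_trace x = (\<Sum>i<field_degree TYPE('a). x ^ (CHAR('a) ^ i))"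

text \<open>The trace lies in the prime field {0,1,...,p-1}; identify it with a natural number k < p.\<close>
definition trace_nat :: "'a::{finite,field} \<Rightarrow> nat" where
  "trace_nat x = (THE k. k < CHAR('a) \<and> of_nat k = field_trace x)"

definition xi :: "'a::{finite,field} itself \<Rightarrow> complex" where
  "xi _ = exp (2 * pi * \<i> / of_nat CHAR('a))"

type_synonym 'b mat = "'b \<Rightarrow> 'b \<Rightarrow> complex"

definition mmult :: "'b::finite mat \<Rightarrow> 'b mat \<Rightarrow> 'b mat" where
  "mmult A B = (\<lambda>x y. \<Sum>z\<in>UNIV. A x z * B z y)"

definition madj :: "'b mat \<Rightarrow> 'b mat" where
  "madj A = (\<lambda>x y. cnj (A y x))"

definition mid :: "'b mat" where
  "mid = (\<lambda>x y. if x = y then 1 else 0)"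

definition msmult :: "complex \<Rightarrow> 'b mat \<Rightarrow> 'b mat" where
  "msmult c A = (\<lambda>x y. c * A x y)"

definition mvec :: "'b::finite mat \<Rightarrow> ('b \<Rightarrow> complex) \<Rightarrow> ('b \<Rightarrow> complex)" where
  "mvec A v = (\<lambda>x. \<Sum>y\<in>UNIV. A x y * v y)"

definition proj :: "('b \<Rightarrow> complex) \<Rightarrow> 'b mat" where
  "proj v = (\<lambda>x y. v x * cnj (v y))"

definition Xop :: "'a::{finite,field} \<Rightarrow> 'a mat" where
  "Xop a = (\<lambda>x y. if x = y + a then 1 else 0)"

definition Zop :: "'a::{finite,field} \<Rightarrow> 'a mat" where
  "Zop b = (\<lambda>x y. if x = y then xi TYPE('a) ^ trace_nat (b * y) else 0)"

text \<open>E_(a,b) = tensor over j of X(a_j) Z(b_j), on C^{q^n} with basis labels 'n => 'a.\<close>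
definition Eop :: "('n::finite \<Rightarrow> 'a::{finite,field}) \<times> ('n \<Rightarrow> 'a) \<Rightarrow> ('n \<Rightarrow> 'a) mat" where
  "Eop ab = (\<lambda>x y. \<Prod>j\<in>UNIV. mmult (Xop (fst ab j)) (Zop (snd ab j)) (x j) (y j))"

definition Fq_linear :: "(('n \<Rightarrow> 'a::field) \<times> ('n \<Rightarrow> 'a)) set \<Rightarrow> bool" where
  "Fq_linear C \<longleftrightarrow> (\<lambda>_. 0, \<lambda>_. 0) \<in> C \<and>
     (\<forall>u\<in>C. \<forall>v\<in>C. (\<lambda>j. fst u j + fst v j, \<lambda>j. snd u j + snd v j) \<in> C) \<and>
     (\<forall>c. \<forall>u\<in>C. (\<lambda>j. c * fst u j, \<lambda>j. c * snd u j) \<in> C)"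

definition symp :: "('n::finite \<Rightarrow> 'a::field) \<times> ('n \<Rightarrow> 'a) \<Rightarrow> ('n \<Rightarrow> 'a) \<times> ('n \<Rightarrow> 'a) \<Rightarrow> 'a" where
  "symp u v = (\<Sum>j\<in>UNIV. fst u j * snd v j) - (\<Sum>j\<in>UNIV. snd u j * fst v j)"

definition symp_dual :: "(('n::finite \<Rightarrow> 'a::field) \<times> ('n \<Rightarrow> 'a)) set \<Rightarrow> (('n \<Rightarrow> 'a) \<times> ('n \<Rightarrow> 'a)) set" where
  "symp_dual C = {v. \<forall>u\<in>C. symp u v = 0}"

definition swt_vec :: "('n::finite \<Rightarrow> 'a::zero) \<times> ('n \<Rightarrow> 'a) \<Rightarrow> nat" where
  "swt_vec v = card {j. (fst v j, snd v j) \<noteq> (0, 0)}"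

definition swt :: "(('n::finite \<Rightarrow> 'a::zero) \<times> ('n \<Rightarrow> 'a)) set \<Rightarrow> nat" where
  "swt D = Min {swt_vec v | v. v \<in> D \<and> v \<noteq> (\<lambda>_. 0, \<lambda>_. 0)}"

inductive_set stab_group :: "(('n::finite \<Rightarrow> 'a::{finite,field}) \<times> ('n \<Rightarrow> 'a)) set \<Rightarrow> ('n \<Rightarrow> 'a) mat set"
  for C where
  scal: "msmult (xi TYPE('a) ^ l) mid \<in> stab_group C"
| gen: "y \<in> C \<Longrightarrow> Eop y \<in> stab_group C"
| mult: "A \<in> stab_group C \<Longrightarrow> B \<in> stab_group C \<Longrightarrow> mmult A B \<in> stab_group C"

definition stab_character :: "(('n::finite \<Rightarrow> 'a::{finite,field}) \<times> ('n \<Rightarrow> 'a)) set \<Rightarrow> (('n \<Rightarrow> 'a) mat \<Rightarrow> complex) \<Rightarrow> bool" where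
  "stab_character C lam \<longleftrightarrow>
     (\<forall>A\<in>stab_group C. \<forall>B\<in>stab_group C. lam (mmult A B) = lam A * lam B) \<and>
     lam (msmult (xi TYPE('a)) mid) = xi TYPE('a)"

definition stab_code :: "(('n::finite \<Rightarrow> 'a::{finite,field}) \<times> ('n \<Rightarrow> 'a)) set \<Rightarrow> (('n \<Rightarrow> 'a) mat \<Rightarrow> complex) \<Rightarrow> (('n \<Rightarrow> 'a) \<Rightarrow> complex) set" where
  "stab_code C lam = {v. \<forall>E\<in>stab_group C. mvec E v = (\<lambda>x. lam E * v x)}"

text \<open>Gamma^I = tensor of the channel Gamma on the qudits in I (identity elsewhere):
  q^{-2|I|} sum over a,b supported in I of E_(a,b) rho E_(a,b)^dagger.\<close>
definition Gamma_on :: "'n::finite set \<Rightarrow> ('n \<Rightarrow> 'a::{finite,field}) mat \<Rightarrow> ('n \<Rightarrow> 'a) mat" where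
  "Gamma_on I rho = msmult (1 / of_nat (CARD('a) ^ (2 * card I)))
     (\<lambda>x y. \<Sum>ab\<in>{ab. \<forall>j. j \<notin> I \<longrightarrow> fst ab j = 0 \<and> snd ab j = 0}.
        mmult (mmult (Eop ab) rho) (madj (Eop ab)) x y)"

text \<open>An operator acting only on the qudits indexed by J: A = B_J tensor Id_{J^c}.\<close>
definition acts_only_on :: "'n set \<Rightarrow> ('n \<Rightarrow> 'a::zero) mat \<Rightarrow> bool" where
  "acts_only_on J A \<longleftrightarrow> (\<exists>B :: ('n \<Rightarrow> 'a) mat. \<forall>x y.
      A x y = (if (\<forall>j. j \<notin> J \<longrightarrow> x j = y j)
               then B (\<lambda>j. if j \<in> J then x j else 0) (\<lambda>j. if j \<in> J then y j else 0) else 0))"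

definition kraus_apply :: "('b::finite) mat list \<Rightarrow> 'b mat \<Rightarrow> 'b mat" where
  "kraus_apply Ks rho = (\<lambda>x y. \<Sum>K\<leftarrow>Ks. mmult (mmult K rho) (madj K) x y)"

definition tp_operation_on :: "'n::finite set \<Rightarrow> ('n \<Rightarrow> 'a::{finite,zero}) mat list \<Rightarrow> bool" where
  "tp_operation_on J Ks \<longleftrightarrow> (\<forall>K\<in>set Ks. acts_only_on J K) \<and>
     (\<lambda>x y. \<Sum>K\<leftarrow>Ks. mmult (madj K) K x y) = mid"

definition locally_recoverable :: "(('n::finite \<Rightarrow> 'a::{finite,field}) \<Rightarrow> complex) set \<Rightarrow> 'n set \<Rightarrow> 'n set \<Rightarrow> bool" where
  "locally_recoverable Q I J \<longleftrightarrow> (\<exists>Ks. tp_operation_on J Ks \<and>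
     (\<forall>v\<in>Q. kraus_apply Ks (Gamma_on I (proj v)) = proj v))"

end

theory Submission
  imports Defs "HOL-Analysis.Analysis" "HOL-Computational_Algebra.Polynomial"
    "HOL-Computational_Algebra.Primes"
begin

lemma char_prime: "prime CHAR('a::{finite,field})"
  using prime_CHAR_semidom[where ?'a='a] finite_imp_CHAR_pos[where ?'a='a] by auto

lemma of_nat_pow_char: "(of_nat k :: 'a::{finite,field}) ^ CHAR('a) = of_nat k"
proof (induction k)
  case 0 then show ?case using char_prime[where ?'a='a] by (simp add: prime_gt_0_nat)
next
  case (Suc k)
  have "(of_nat (Suc k) :: 'a) ^ CHAR('a) = (of_nat k + 1) ^ CHAR('a)" by (simp add: add.commute)
  also have "\<dots> = of_nat k ^ CHAR('a) + 1 ^ CHAR('a)"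
    by (rule freshmans_dream) (simp_all add: char_prime)
  finally show ?case using Suc by simp
qed

lemma of_nat_inv_char:
  assumes "\<not> CHAR('a) dvd j"
  shows "(of_nat (j * j ^ (CHAR('a) - 2)) :: 'a::{finite,field}) = 1"
proof -
  have p2: "CHAR('a) \<ge> 2" using char_prime[where ?'a='a] prime_ge_2_nat by blast
  have nz: "(of_nat j :: 'a) \<noteq> 0" using assms of_nat_eq_0_iff_char_dvd by blast
  obtain r where r: "CHAR('a) = Suc (Suc r)" using p2 by (metis add_2_eq_Suc le_Suc_ex)
  have "(of_nat j :: 'a) * of_nat j ^ (CHAR('a) - 2) * of_nat j = of_nat j ^ CHAR('a)"
    unfolding r by (simp add: algebra_simps)
  also have "\<dots> = of_nat j" by (rule of_nat_pow_char)
  finally have "(of_nat j :: 'a) * of_nat j ^ (CHAR('a) - 2) * of_nat j = 1 * of_nat j" by simp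
  then show ?thesis using nz by simp
qed

definition addsub :: "'a::field set \<Rightarrow> bool" where
  "addsub S \<longleftrightarrow> 0 \<in> S \<and> (\<forall>x\<in>S. \<forall>y\<in>S. x + y \<in> S) \<and> (\<forall>x\<in>S. -x \<in> S)"

lemma addsub_ofnat: "addsub S \<Longrightarrow> y \<in> S \<Longrightarrow> of_nat t * y \<in> S"
  by (induction t) (auto simp: addsub_def distrib_right)

lemma subgroup_card_pow:
  fixes S :: "'a::{finite,field} set"
  assumes "addsub S"
  shows "\<exists>i. card S * CHAR('a) ^ i = CARD('a)"
  using assms
proof (induction "card (UNIV - S)" arbitrary: S rule: less_induct)
  case (less S)
  let ?p = "CHAR('a)"
  have p2: "?p \<ge> 2" using char_prime[where ?'a='a] prime_ge_2_nat by blast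
  show ?case
  proof (cases "S = UNIV")
    case True then show ?thesis by (intro exI[of _ 0]) simp
  next
    case False
    then obtain x where x: "x \<notin> S" by blast
    define f where "f = (\<lambda>(s::'a, k::nat). s + of_nat k * x)"
    define S' where "S' = f ` (S \<times> {..<?p})"
    have inj: "inj_on f (S \<times> {..<?p})"
    proof (rule inj_onI, clarsimp simp: f_def)
      fix s k s' k' assume s: "s \<in> S" "s' \<in> S" and k: "k < ?p" "k' < ?p"
        and eq: "s + of_nat k * x = s' + of_nat k' * x"
      have main: "k = k'" if "s \<in> S" "s' \<in> S" "k < ?p" "k' < ?p" "k' \<le> k"
         "s + of_nat k * x = s' + of_nat k' * x" for s s' k k'
      proof (rule ccontr)
        assume "k \<noteq> k'"
        define j where "j = k - k'"
        have j: "0 < j" "j < ?p" using that \<open>k \<noteq> k'\<close> by (auto simp: j_def)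
        have ndvd: "\<not> ?p dvd j" using j by (auto dest: dvd_imp_le)
        have "of_nat j * x = s' + (- s)"
          using that by (simp add: j_def of_nat_diff algebra_simps)
        moreover have "s' + (- s) \<in> S" using less.prems that unfolding addsub_def by blast
        ultimately have "of_nat j * x \<in> S" by simp
        then have "of_nat (j ^ (?p - 2)) * (of_nat j * x) \<in> S"
          by (rule addsub_ofnat[OF less.prems])
        moreover have "of_nat (j ^ (?p - 2)) * (of_nat j * x) = of_nat (j * j ^ (?p - 2)) * x"
          by (simp add: algebra_simps)
        moreover have "(of_nat (j * j ^ (?p - 2)) :: 'a) = 1" by (rule of_nat_inv_char[OF ndvd])
        ultimately show False using x by (metis mult.assoc mult_1)
      qed
      show "s = s' \<and> k = k'"
      proof (cases "k' \<le> k")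
        case True then have "k = k'" using main s k eq by blast
        then show ?thesis using eq by simp
      next
        case False then have "k' = k" using main[of s' s k' k] s k eq by simp
        then show ?thesis using eq by simp
      qed
    qed
    have cardS': "card S' = card S * ?p"
      unfolding S'_def using card_image[OF inj] by (simp add: card_cartesian_product)
    have sub: "S \<subseteq> S'"
    proof
      fix s assume "s \<in> S"
      then have "(s, 0) \<in> S \<times> {..<?p}" "s = f (s, 0)" using p2 by (auto simp: f_def)
      then show "s \<in> S'" unfolding S'_def by blast
    qed
    have xS': "x \<in> S'"
    proof -
      have "(0, 1) \<in> S \<times> {..<?p}" "x = f (0, 1)" using p2 less.prems by (auto simp: f_def addsub_def)
      then show ?thesis unfolding S'_def by blast
    qed
    have ofnat_mod: "(of_nat (n mod ?p) :: 'a) = of_nat n" for n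
    proof -
      have "(of_nat n :: 'a) = of_nat (n mod ?p + ?p * (n div ?p))" by simp
      also have "\<dots> = of_nat (n mod ?p)" by (simp only: of_nat_add of_nat_mult of_nat_CHAR) simp
      finally show ?thesis by simp
    qed
    have add': "addsub S'"
      unfolding addsub_def
    proof (intro conjI ballI)
      show "0 \<in> S'" using sub less.prems by (auto simp: addsub_def)
    next
      fix u v assume "u \<in> S'" "v \<in> S'"
      then obtain s k s' k' where "s \<in> S" "s' \<in> S" "k < ?p" "k' < ?p" "u = s + of_nat k * x" "v = s' + of_nat k' * x"
        unfolding S'_def f_def by auto
      then have "u + v = f (s + s', (k + k') mod ?p)" "(s + s', (k + k') mod ?p) \<in> S \<times> {..<?p}"
        using less.prems p2 by (auto simp: f_def ofnat_mod algebra_simps addsub_def)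
      then show "u + v \<in> S'" unfolding S'_def by blast
    next
      fix u assume "u \<in> S'"
      then obtain s k where "s \<in> S" "k < ?p" "u = s + of_nat k * x"
        unfolding S'_def f_def by auto
      then have "-u = f (-s, (?p - k) mod ?p)" "(-s, (?p - k) mod ?p) \<in> S \<times> {..<?p}"
        using less.prems p2 by (auto simp: f_def ofnat_mod of_nat_diff algebra_simps addsub_def)
      then show "-u \<in> S'" unfolding S'_def by blast
    qed
    have "card (UNIV - S') < card (UNIV - S)"
      by (rule psubset_card_mono) (use sub xS' x in auto)
    then obtain i where "card S' * ?p ^ i = CARD('a)" using less.hyps add' by blast
    then show ?thesis using cardS' by (intro exI[of _ "Suc i"]) (simp add: mult_ac)
  qed
qed

lemma card_char_pow: "\<exists>m. CARD('a::{finite,field}) = CHAR('a) ^ m"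
proof -
  have "addsub {0::'a}" by (simp add: addsub_def)
  from subgroup_card_pow[OF this] show ?thesis by (auto simp del: diff_conv_add_uminus) (metis)
qed

lemma field_degree_eq: "CARD('a::{finite,field}) = CHAR('a) ^ field_degree TYPE('a)"
proof -
  have p2: "CHAR('a) \<ge> 2" using char_prime[where ?'a='a] prime_ge_2_nat by blast
  obtain m where m: "CARD('a) = CHAR('a) ^ m" using card_char_pow by blast
  have "field_degree TYPE('a) = m"
    unfolding field_degree_def
    by (rule the_equality) (use m p2 power_inject_exp in auto)
  then show ?thesis using m by simp
qed


abbreviation pc :: "'a::{finite,field} itself \<Rightarrow> nat" where "pc _ \<equiv> CHAR('a)"

lemma p2: "CHAR('a::{finite,field}) \<ge> 2"
  using char_prime[where ?'a='a] prime_ge_2_nat by blast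

lemma pow_card_same: "(x::'a::{finite,field}) ^ CARD('a) = x"
proof (cases "x = 0")
  case False
  have "x * (\<Prod>y\<in>UNIV-{0}. x * y) = x * x ^ (CARD('a) - 1) * \<Prod>(UNIV-{0::'a})"
    by (simp add: prod.distrib mult_ac)
  also have "x * x ^ (CARD('a) - 1) = x ^ Suc (CARD('a) - 1)"
    by (subst power_Suc) auto
  also have "Suc (CARD('a) - 1) = CARD('a)"
    using finite_UNIV_card_ge_0[where ?'a = 'a] by simp
  also have "(\<Prod>y\<in>UNIV-{0}. x * y) = (\<Prod>y\<in>UNIV-{0::'a}. y)"
    by (rule prod.reindex_bij_witness[of _ "\<lambda>y. y / x" "\<lambda>y. x * y"]) (use False in auto)
  finally show ?thesis
    by simp
qed (use finite_UNIV_card_ge_0[where ?'a = 'a] in auto)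

lemma field_degree_pos: "field_degree TYPE('a::{finite,field}) > 0"
proof (rule ccontr)
  assume "\<not> ?thesis"
  then have "CARD('a) = 1" using field_degree_eq[where ?'a='a] by simp
  moreover have "{0::'a, 1} \<subseteq> UNIV" by simp
  then have "card {0::'a, 1} \<le> CARD('a)" by (intro card_mono) auto
  ultimately show False by simp
qed

lemma trace_add: "field_trace ((x::'a::{finite,field}) + y) = field_trace x + field_trace y"
  unfolding field_trace_def
  by (simp add: freshmans_dream'[OF char_prime] sum.distrib)

lemma trace_zero: "field_trace (0::'a::{finite,field}) = 0"
  unfolding field_trace_def using p2[where ?'a='a] by (simp add: zero_power)

lemma of_nat_mod_char: "(of_nat (n mod CHAR('a)) :: 'a::{finite,field}) = of_nat n"
proof -
  have "(of_nat n :: 'a) = of_nat (n mod CHAR('a) + CHAR('a) * (n div CHAR('a)))" by simp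
  also have "\<dots> = of_nat (n mod CHAR('a))" by (simp only: of_nat_add of_nat_mult of_nat_CHAR) simp
  finally show ?thesis by simp
qed

lemma trace_pow: "field_trace (x::'a::{finite,field}) ^ CHAR('a) = field_trace x"
proof -
  let ?p = "CHAR('a)" and ?m = "field_degree TYPE('a)"
  define f where "f = (\<lambda>i. x ^ (?p ^ i))"
  have "field_trace x ^ ?p = (\<Sum>i<?m. f i ^ ?p)"
    unfolding field_trace_def f_def by (rule freshmans_dream_sum[OF char_prime refl])
  also have "\<dots> = (\<Sum>i<?m. f (Suc i))"
    by (simp add: f_def power_mult[symmetric] mult.commute)
  also have "\<dots> = (\<Sum>i<?m. f i)"
  proof -
    have "(\<Sum>i<Suc ?m. f i) = f 0 + (\<Sum>i<?m. f (Suc i))" by (rule sum.lessThan_Suc_shift)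
    moreover have "(\<Sum>i<Suc ?m. f i) = (\<Sum>i<?m. f i) + f ?m" by simp
    moreover have "f ?m = f 0"
      unfolding f_def using pow_card_same[of x] field_degree_eq[where ?'a='a] by simp
    ultimately show ?thesis by (simp add: add.commute)
  qed
  finally show ?thesis unfolding field_trace_def f_def .
qed

lemma of_nat_inj_char:
  assumes "a < CHAR('a::{finite,field})" "b < CHAR('a)" "(of_nat a :: 'a) = of_nat b"
  shows "a = b"
proof (rule ccontr)
  assume ne: "a \<noteq> b"
  have *: "False" if "x < CHAR('a)" "y < x" "(of_nat x :: 'a) = of_nat y" for x y
  proof -
    have "(of_nat (x - y) :: 'a) = 0" using that by (simp add: of_nat_diff)
    then have "CHAR('a) dvd (x - y)" by (simp add: of_nat_eq_0_iff_char_dvd)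
    then show False using that by (auto dest: dvd_imp_le)
  qed
  show False using ne assms *[of a b] *[of b a] by (cases "a < b") auto
qed

lemma prime_field:
  assumes "(y::'a::{finite,field}) ^ CHAR('a) = y"
  shows "\<exists>k<CHAR('a). of_nat k = y"
proof -
  let ?p = "CHAR('a)"
  define P where "P = monom (1::'a) ?p - monom 1 1"
  have polyP: "poly P z = z ^ ?p - z" for z by (simp add: P_def poly_monom)
  have "coeff P ?p = 1" using p2[where ?'a='a] by (simp add: P_def)
  then have Pnz: "P \<noteq> 0" by auto
  have degP: "degree P \<le> ?p"
    unfolding P_def using p2[where ?'a='a]
    by (intro degree_diff_le) (auto intro: order.trans[OF degree_monom_le])
  let ?R = "{z. poly P z = 0}"
  have sub: "of_nat ` {..<?p} \<subseteq> ?R" by (auto simp: polyP of_nat_pow_char)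
  have inj: "inj_on (of_nat :: nat \<Rightarrow> 'a) {..<?p}"
    by (rule inj_onI) (auto intro: of_nat_inj_char)
  have cardim: "card (of_nat ` {..<?p} :: 'a set) = ?p" using card_image[OF inj] by simp
  have "card ?R \<le> ?p" using card_poly_roots_bound[OF Pnz] degP by linarith
  then have "of_nat ` {..<?p} = ?R"
    using card_subset_eq[OF _ sub] cardim card_mono[OF _ sub] by (simp add: le_antisym)
  moreover have "y \<in> ?R" using assms by (simp add: polyP)
  ultimately show ?thesis by (metis (mono_tags, lifting) imageE lessThan_iff mem_Collect_eq)
qed

lemma trace_nat_prop:
  "trace_nat (x::'a::{finite,field}) < CHAR('a) \<and> of_nat (trace_nat x) = field_trace x"
proof -
  obtain k where k: "k < CHAR('a)" "of_nat k = field_trace x"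
    using prime_field[OF trace_pow] by blast
  have "trace_nat x = k"
    unfolding trace_nat_def
    by (rule the_equality) (use k of_nat_inj_char[where ?'a='a] in auto)
  then show ?thesis using k by simp
qed

lemma trace_nonzero: "\<exists>x::'a::{finite,field}. field_trace x \<noteq> 0"
proof (rule ccontr)
  assume "\<not> ?thesis"
  then have all0: "\<And>x::'a. field_trace x = 0" by blast
  let ?p = "CHAR('a)" and ?m = "field_degree TYPE('a)"
  have mpos: "?m > 0" by (rule field_degree_pos)
  have pgt: "?p > 1" using p2[where ?'a='a] by simp
  define T where "T = (\<Sum>i<?m. monom (1::'a) (?p ^ i))"
  have polyT: "poly T x = field_trace x" for x
    by (simp add: T_def poly_sum poly_monom field_trace_def)
  have coeffT: "coeff T k = (\<Sum>i<?m. if ?p ^ i = k then 1 else 0)" for k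
    by (simp add: T_def coeff_sum)
  have "coeff T (?p ^ (?m - 1)) = (\<Sum>i\<in>{?m - 1}. 1)"
    unfolding coeffT
    by (rule sum.mono_neutral_cong_right) (use mpos pgt power_inject_exp in auto)
  then have Tnz: "T \<noteq> 0" by auto
  have degT: "degree T \<le> ?p ^ (?m - 1)"
  proof (rule degree_le, intro allI impI)
    fix k assume k: "?p ^ (?m - 1) < k"
    have "?p ^ i \<noteq> k" if "i < ?m" for i
    proof -
      have "?p ^ i \<le> ?p ^ (?m - 1)" using that pgt by (intro power_increasing) auto
      then show ?thesis using k by simp
    qed
    then show "coeff T k = 0" unfolding coeffT by simp
  qed
  have "card {x. poly T x = 0} \<le> ?p ^ (?m - 1)" using card_poly_roots_bound[OF Tnz] degT by linarith
  moreover have "{x. poly T x = 0} = (UNIV :: 'a set)" using all0 polyT by auto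
  moreover have "?p ^ (?m - 1) < ?p ^ ?m" using mpos pgt by (intro power_strict_increasing) auto
  ultimately show False using field_degree_eq[where ?'a='a] by simp
qed

definition omega :: "'a::{finite,field} \<Rightarrow> complex" where
  "omega t = xi TYPE('a) ^ trace_nat t"

lemma xi_pow: "xi TYPE('a::{finite,field}) ^ k = exp (2 * of_real pi * \<i> * of_nat k / of_nat CHAR('a))"
  unfolding xi_def by (simp add: exp_of_nat_mult[symmetric] algebra_simps)

lemma xi_pow_eq: "xi TYPE('a::{finite,field}) ^ a = xi TYPE('a) ^ b \<longleftrightarrow> a mod CHAR('a) = b mod CHAR('a)"
  unfolding xi_pow using p2[where ?'a='a] by (intro complex_root_unity_eq) auto

lemma norm_xi_pow: "norm (xi TYPE('a::{finite,field}) ^ k) = 1"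
proof -
  have "norm (xi TYPE('a)) = 1"
    unfolding xi_def by (simp add: norm_exp_eq_Re)
  then show ?thesis by (simp add: norm_power)
qed

lemma omega_add: "omega ((s::'a::{finite,field}) + t) = omega s * omega t"
proof -
  let ?p = "CHAR('a)"
  have "(of_nat (trace_nat (s + t)) :: 'a) = of_nat (trace_nat s + trace_nat t)"
    using trace_nat_prop[of s] trace_nat_prop[of t] trace_nat_prop[of "s+t"] by (simp add: trace_add)
  then have "(of_nat (trace_nat (s + t)) :: 'a) = of_nat ((trace_nat s + trace_nat t) mod ?p)"
    by (simp add: of_nat_mod_char)
  then have "trace_nat (s + t) = (trace_nat s + trace_nat t) mod ?p"
    using p2[where ?'a='a] trace_nat_prop[of "s+t"] by (intro of_nat_inj_char) auto
  then have "omega (s + t) = xi TYPE('a) ^ (trace_nat s + trace_nat t)"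
    unfolding omega_def using xi_pow_eq[where ?'a='a] by simp
  then show ?thesis unfolding omega_def by (simp add: power_add)
qed

lemma omega_zero: "omega (0::'a::{finite,field}) = 1"
proof -
  have "(of_nat (trace_nat (0::'a)) :: 'a) = of_nat 0" using trace_nat_prop[of "0::'a"] trace_zero by simp
  then have "trace_nat (0::'a) = 0" using trace_nat_prop[of "0::'a"] p2[where ?'a='a]
    by (intro of_nat_inj_char) auto
  then show ?thesis by (simp add: omega_def)
qed

lemma norm_omega: "norm (omega (t::'a::{finite,field})) = 1"
  unfolding omega_def by (rule norm_xi_pow)

lemma omega_nz: "omega (t::'a::{finite,field}) \<noteq> 0"
  using norm_omega[of t] by auto

lemma omega_neg: "omega (- (t::'a::{finite,field})) = cnj (omega t)"
proof -
  have "omega (-t) * omega t = omega (-t + t)" by (rule omega_add[symmetric])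
  then have "omega (-t) * omega t = 1" by (simp add: omega_zero)
  then have a: "omega (-t) = 1 / omega t" using omega_nz[of t] by (simp add: field_simps)
  have "omega t * cnj (omega t) = of_real ((norm (omega t))^2)" by (rule complex_norm_square[symmetric])
  then have "omega t * cnj (omega t) = 1" by (simp add: norm_omega)
  then have "cnj (omega t) = 1 / omega t" using omega_nz[of t] by (simp add: field_simps)
  then show ?thesis using a by simp
qed

lemma omega_diff: "omega ((s::'a::{finite,field}) - t) = omega s * cnj (omega t)"
  using omega_add[of s "-t"] omega_neg[of t] by simp

lemma omega_cnj_mult: "cnj (omega (t::'a::{finite,field})) * omega t = 1"
proof -
  have "omega (-t) * omega t = omega (-t + t)" by (rule omega_add[symmetric])
  then show ?thesis by (simp add: omega_zero omega_neg)
qed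

lemma omega_sum: "finite A \<Longrightarrow> omega (\<Sum>j\<in>A. f j :: 'a::{finite,field}) = (\<Prod>j\<in>A. omega (f j))"
  by (induction A rule: finite_induct) (auto simp: omega_zero omega_add)

lemma omega_nontriv: "\<exists>t::'a::{finite,field}. omega t \<noteq> 1"
proof -
  obtain x :: 'a where x: "field_trace x \<noteq> 0" using trace_nonzero by blast
  have "trace_nat x \<noteq> 0" using x trace_nat_prop[of x] by (metis of_nat_0)
  then have "trace_nat x mod CHAR('a) \<noteq> 0 mod CHAR('a)" using trace_nat_prop[of x] by simp
  then have "omega x \<noteq> xi TYPE('a) ^ 0" unfolding omega_def using xi_pow_eq[where ?'a='a] by blast
  then show ?thesis by auto
qed


section \<open>Generic matrix algebra\<close>

lemma mmult_assoc: "mmult (mmult A B) (C::'b::finite mat) = mmult A (mmult B C)"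
  unfolding mmult_def
  by (rule ext, rule ext) (simp add: sum_distrib_left sum_distrib_right mult.assoc, rule sum.swap)

lemma mmult_msmult_left: "mmult (msmult c A) (B::'b::finite mat) = msmult c (mmult A B)"
  unfolding mmult_def msmult_def by (simp add: sum_distrib_left mult.assoc)

lemma mmult_msmult_right: "mmult A (msmult c (B::'b::finite mat)) = msmult c (mmult A B)"
  unfolding mmult_def msmult_def by (simp add: sum_distrib_left mult_ac)

lemma msmult_msmult: "msmult a (msmult b A) = msmult (a * b) A"
  unfolding msmult_def by (simp add: mult.assoc)

lemma msmult_1: "msmult 1 A = A"
  unfolding msmult_def by simp

lemma sum_delta_left: "(\<Sum>z\<in>(UNIV::'b::finite set). (if x = z then 1 else 0) * f z) = (f x :: complex)"
proof -
  have "(\<Sum>z\<in>(UNIV::'b set). (if x = z then 1 else 0) * f z) = (\<Sum>z\<in>UNIV. if x = z then f x else 0)"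
    by (rule sum.cong) auto
  also have "\<dots> = f x" by simp
  finally show ?thesis .
qed

lemma sum_delta_right: "(\<Sum>z\<in>(UNIV::'b::finite set). f z * (if z = y then 1 else 0)) = (f y :: complex)"
proof -
  have "(\<Sum>z\<in>(UNIV::'b set). f z * (if z = y then 1 else 0)) = (\<Sum>z\<in>UNIV. if y = z then f y else 0)"
    by (rule sum.cong) auto
  also have "\<dots> = f y" by simp
  finally show ?thesis .
qed

lemma mmult_mid_left: "mmult mid (A::'b::finite mat) = A"
  unfolding mmult_def mid_def by (intro ext) (rule sum_delta_left)

lemma mmult_mid_right: "mmult (A::'b::finite mat) mid = A"
  unfolding mmult_def mid_def by (intro ext) (rule sum_delta_right)

lemma madj_mmult: "madj (mmult A (B::'b::finite mat)) = mmult (madj B) (madj A)"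
  unfolding madj_def mmult_def by (simp add: mult.commute)

lemma madj_madj: "madj (madj A) = A"
  unfolding madj_def by simp

lemma madj_msmult: "madj (msmult c A) = msmult (cnj c) (madj A)"
  unfolding madj_def msmult_def by simp

lemma madj_mid: "madj mid = mid"
  unfolding madj_def mid_def by (intro ext) auto

lemma mvec_mmult: "mvec (mmult A B) v = mvec A (mvec (B::'b::finite mat) v)"
  unfolding mvec_def mmult_def
  by (rule ext) (simp add: sum_distrib_left sum_distrib_right mult.assoc, rule sum.swap)

lemma mvec_msmult: "mvec (msmult c A) v = (\<lambda>x. c * mvec (A::'b::finite mat) v x)"
  unfolding mvec_def msmult_def by (simp add: sum_distrib_left mult.assoc)

lemma mvec_mid: "mvec mid v = (v :: 'b::finite \<Rightarrow> complex)"
  unfolding mvec_def mid_def by (intro ext) (rule sum_delta_left)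

lemma mvec_zero: "mvec A (\<lambda>_. 0) = (\<lambda>_. 0::complex)"
  unfolding mvec_def by simp

lemma mvec_scal: "mvec A (\<lambda>x. c * v x) = (\<lambda>x. c * mvec (A::'b::finite mat) v x)"
  unfolding mvec_def by (simp add: sum_distrib_left mult_ac)

lemma mvec_lincomb:
  "mvec (\<lambda>x y. a * (\<Sum>c\<in>S. g c * A c x y)) v = (\<lambda>x. a * (\<Sum>c\<in>S. g c * mvec (A c) v x))"
  for A :: "'c \<Rightarrow> 'b::finite mat"
  unfolding mvec_def
  by (rule ext) (simp add: sum_distrib_left sum_distrib_right mult_ac, rule sum.swap)

lemma proj_conj:
  "mmult (mmult K (proj w)) (madj K) = proj (mvec (K::'b::finite mat) w)"
  unfolding mmult_def proj_def madj_def mvec_def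
  by (rule ext, rule ext) (simp add: sum_distrib_left sum_distrib_right mult_ac)

lemma mmult_sum_right:
  "mmult K (\<lambda>x y. \<Sum>e\<in>S. M e x y) = (\<lambda>x y. \<Sum>e\<in>S. mmult (K::'b::finite mat) (M e) x y)"
  unfolding mmult_def by (intro ext) (simp add: sum_distrib_left, rule sum.swap)

lemma mmult_sum_left:
  "mmult (\<lambda>x y. \<Sum>e\<in>S. M e x y) K = (\<lambda>x y. \<Sum>e\<in>S. mmult (M e) (K::'b::finite mat) x y)"
  unfolding mmult_def by (intro ext) (simp add: sum_distrib_right, rule sum.swap)

lemma conj_lincomb:
  "mmult (mmult K (\<lambda>x y. a * (\<Sum>e\<in>S. M e x y))) (madj K) =
   (\<lambda>x y. a * (\<Sum>e\<in>S. mmult (mmult K (M e)) (madj K) x y))"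
  for K :: "'b::finite mat"
proof -
  have eq: "(\<lambda>x y. a * (\<Sum>e\<in>S. M e x y)) = msmult a (\<lambda>x y. \<Sum>e\<in>S. M e x y)"
    by (simp add: msmult_def)
  show ?thesis
    unfolding eq mmult_msmult_right mmult_sum_right mmult_msmult_left mmult_sum_left
    by (simp add: msmult_def)
qed


definition vadd :: "('n \<Rightarrow> 'a::field) \<times> ('n \<Rightarrow> 'a) \<Rightarrow> ('n \<Rightarrow> 'a) \<times> ('n \<Rightarrow> 'a) \<Rightarrow> ('n \<Rightarrow> 'a) \<times> ('n \<Rightarrow> 'a)" where
  "vadd u w = (\<lambda>j. fst u j + fst w j, \<lambda>j. snd u j + snd w j)"

definition vsmul :: "'a::field \<Rightarrow> ('n \<Rightarrow> 'a) \<times> ('n \<Rightarrow> 'a) \<Rightarrow> ('n \<Rightarrow> 'a) \<times> ('n \<Rightarrow> 'a)" where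
  "vsmul c u = (\<lambda>j. c * fst u j, \<lambda>j. c * snd u j)"

definition vneg :: "('n \<Rightarrow> 'a::field) \<times> ('n \<Rightarrow> 'a) \<Rightarrow> ('n \<Rightarrow> 'a) \<times> ('n \<Rightarrow> 'a)" where
  "vneg u = (\<lambda>j. - fst u j, \<lambda>j. - snd u j)"

definition dotp :: "('n::finite \<Rightarrow> 'a::field) \<Rightarrow> ('n \<Rightarrow> 'a) \<Rightarrow> 'a" where
  "dotp b y = (\<Sum>j\<in>UNIV. b j * y j)"

lemma sum_delta_right': "(\<Sum>z\<in>(UNIV::'b::finite set). g z * (if z = t then c else 0)) = (g t * c :: complex)"
proof -
  have "(\<Sum>z\<in>(UNIV::'b set). g z * (if z = t then c else 0)) = (\<Sum>z\<in>UNIV. if t = z then g t * c else 0)"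
    by (rule sum.cong) auto
  also have "\<dots> = g t * c" by simp
  finally show ?thesis .
qed

lemma XZ_entry: "mmult (Xop a) (Zop b) s t = (if s = t + a then omega (b * t) else 0)"
  for a b s t :: "'a::{finite,field}"
  unfolding mmult_def Zop_def Xop_def omega_def
  by (subst sum_delta_right') simp

lemma Eop_entry:
  "Eop u x y = (if x = (\<lambda>j. y j + fst u j) then omega (dotp (snd u) y) else 0)"
  for u :: "('n::finite \<Rightarrow> 'a::{finite,field}) \<times> ('n \<Rightarrow> 'a)"
proof (cases "x = (\<lambda>j. y j + fst u j)")
  case True
  then have "Eop u x y = (\<Prod>j\<in>UNIV. omega (snd u j * y j))"
    unfolding Eop_def XZ_entry by simp
  also have "\<dots> = omega (dotp (snd u) y)"
    unfolding dotp_def by (rule omega_sum[symmetric]) simp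
  finally show ?thesis using True by simp
next
  case False
  then obtain j where "x j \<noteq> y j + fst u j" by auto
  then have "Eop u x y = 0"
    unfolding Eop_def XZ_entry by (intro prod_zero) auto
  then show ?thesis using False by simp
qed

lemma dotp_add_right: "dotp b (\<lambda>j. y j + z j) = dotp b y + dotp b z"
  unfolding dotp_def by (simp add: distrib_left sum.distrib)

lemma dotp_add_left: "dotp (\<lambda>j. b j + c j) y = dotp b y + dotp c y"
  unfolding dotp_def by (simp add: distrib_right sum.distrib)

lemma dotp_neg_left: "dotp (\<lambda>j. - b j) y = - dotp b y"
  unfolding dotp_def by (simp add: sum_negf)

lemma dotp_neg_right: "dotp b (\<lambda>j. - y j) = - dotp b y"
  unfolding dotp_def by (simp add: sum_negf)

lemma dotp_comm: "dotp b y = dotp y b"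
  unfolding dotp_def by (simp add: mult.commute)

lemma E_mult:
  "mmult (Eop u) (Eop w) = msmult (omega (dotp (snd u) (fst w))) (Eop (vadd u w))"
  for u w :: "('n::finite \<Rightarrow> 'a::{finite,field}) \<times> ('n \<Rightarrow> 'a)"
proof (intro ext)
  fix x y :: "'n \<Rightarrow> 'a"
  let ?z = "\<lambda>j. y j + fst w j"
  have "mmult (Eop u) (Eop w) x y = (\<Sum>z\<in>UNIV. Eop u x z * (if z = ?z then omega (dotp (snd w) y) else 0))"
    unfolding mmult_def by (simp add: Eop_entry[of w])
  also have "\<dots> = Eop u x ?z * omega (dotp (snd w) y)" by (rule sum_delta_right')
  also have "\<dots> = msmult (omega (dotp (snd u) (fst w))) (Eop (vadd u w)) x y"
    unfolding msmult_def Eop_entry vadd_def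
    by (auto simp: add.assoc dotp_add_right dotp_add_left omega_add mult_ac)
  finally show "mmult (Eop u) (Eop w) x y = msmult (omega (dotp (snd u) (fst w))) (Eop (vadd u w)) x y" .
qed

lemma E_adj:
  "madj (Eop u) = msmult (omega (dotp (snd u) (fst u))) (Eop (vneg u))"
  for u :: "('n::finite \<Rightarrow> 'a::{finite,field}) \<times> ('n \<Rightarrow> 'a)"
proof (intro ext)
  fix x y :: "'n \<Rightarrow> 'a"
  show "madj (Eop u) x y = msmult (omega (dotp (snd u) (fst u))) (Eop (vneg u)) x y"
  proof (cases "x = (\<lambda>j. y j - fst u j)")
    case True
    then have y: "y = (\<lambda>j. x j + fst u j)" by auto
    have "madj (Eop u) x y = cnj (omega (dotp (snd u) x))"
      unfolding madj_def Eop_entry using y by simp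
    also have "\<dots> = omega (- dotp (snd u) x)" by (simp add: omega_neg)
    also have "\<dots> = omega (dotp (snd u) (fst u)) * omega (dotp (\<lambda>j. - snd u j) y)"
      by (simp add: y dotp_add_right dotp_neg_left omega_add[symmetric])
    finally show ?thesis unfolding msmult_def Eop_entry vneg_def using True by simp
  next
    case False
    then have "y \<noteq> (\<lambda>j. x j + fst u j)" by auto
    then show ?thesis unfolding msmult_def madj_def Eop_entry vneg_def using False
      by auto
  qed
qed

lemma E_zero: "Eop ((\<lambda>_. 0, \<lambda>_. 0) :: ('n::finite \<Rightarrow> 'a::{finite,field}) \<times> ('n \<Rightarrow> 'a)) = mid"
  unfolding mid_def by (intro ext) (simp add: Eop_entry dotp_def omega_zero)

lemma vadd_vneg: "vadd u (vneg u) = (\<lambda>_. 0, \<lambda>_. 0)"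
  unfolding vadd_def vneg_def by simp

lemma vadd_comm: "vadd u w = vadd w u"
  unfolding vadd_def by (simp add: add.commute)

lemma E_unitary: "mmult (Eop u) (madj (Eop u)) = mid"
  for u :: "('n::finite \<Rightarrow> 'a::{finite,field}) \<times> ('n \<Rightarrow> 'a)"
proof -
  have "mmult (Eop u) (madj (Eop u)) =
    msmult (omega (dotp (snd u) (fst u)) * omega (dotp (snd u) (fst (vneg u)))) (Eop (vadd u (vneg u)))"
    unfolding E_adj mmult_msmult_right E_mult msmult_msmult ..
  also have "omega (dotp (snd u) (fst u)) * omega (dotp (snd u) (fst (vneg u))) = 1"
    by (simp add: vneg_def dotp_neg_right omega_add[symmetric] omega_zero)
  finally show ?thesis by (simp add: vadd_vneg E_zero msmult_1)
qed

lemma E_unitary': "mmult (madj (Eop u)) (Eop u) = mid"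
  for u :: "('n::finite \<Rightarrow> 'a::{finite,field}) \<times> ('n \<Rightarrow> 'a)"
proof -
  have "mmult (madj (Eop u)) (Eop u) =
    msmult (omega (dotp (snd u) (fst u)) * omega (dotp (snd (vneg u)) (fst u))) (Eop (vadd (vneg u) u))"
    unfolding E_adj mmult_msmult_left E_mult msmult_msmult ..
  also have "omega (dotp (snd u) (fst u)) * omega (dotp (snd (vneg u)) (fst u)) = 1"
    by (simp add: vneg_def dotp_neg_left omega_add[symmetric] omega_zero)
  finally show ?thesis by (simp add: vadd_comm[of "vneg u"] vadd_vneg E_zero msmult_1)
qed

lemma mvec_E: "mvec (Eop u) v x = omega (dotp (snd u) (\<lambda>j. x j - fst u j)) * v (\<lambda>j. x j - fst u j)"
  for u :: "('n::finite \<Rightarrow> 'a::{finite,field}) \<times> ('n \<Rightarrow> 'a)"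
proof -
  let ?y = "\<lambda>j. x j - fst u j"
  have "mvec (Eop u) v x = (\<Sum>y\<in>UNIV. if y = ?y then omega (dotp (snd u) y) * v y else 0)"
    unfolding mvec_def Eop_entry by (rule sum.cong) auto
  then show ?thesis by simp
qed

lemma E_norm: "(\<Sum>x\<in>UNIV. (norm (mvec (Eop u) v x))^2) = (\<Sum>x\<in>UNIV. (norm (v x))^2)"
  for u :: "('n::finite \<Rightarrow> 'a::{finite,field}) \<times> ('n \<Rightarrow> 'a)"
proof -
  have "(\<Sum>x\<in>UNIV. (norm (mvec (Eop u) v x))^2) = (\<Sum>x\<in>UNIV. (norm (v (\<lambda>j. x j - fst u j)))^2)"
    unfolding mvec_E by (simp add: norm_mult norm_omega)
  also have "\<dots> = (\<Sum>x\<in>UNIV. (norm (v x))^2)"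
    by (rule sum.reindex_bij_witness[of _ "\<lambda>x j. x j + fst u j" "\<lambda>x j. x j - fst u j"]) auto
  finally show ?thesis .
qed


definition agreeo :: "'n set \<Rightarrow> ('n \<Rightarrow> 'a) \<Rightarrow> ('n \<Rightarrow> 'a) \<Rightarrow> bool" where
  "agreeo J x y \<longleftrightarrow> (\<forall>j. j \<notin> J \<longrightarrow> x j = y j)"

definition rJ :: "'n set \<Rightarrow> ('n \<Rightarrow> 'a::zero) \<Rightarrow> ('n \<Rightarrow> 'a)" where
  "rJ J x = (\<lambda>j. if j \<in> J then x j else 0)"

definition loc :: "'n set \<Rightarrow> ('n \<Rightarrow> 'a::zero) mat \<Rightarrow> bool" where
  "loc J A \<longleftrightarrow> (\<forall>x y. A x y = (if agreeo J x y then A (rJ J x) (rJ J y) else 0))"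

lemma loc_acts: "loc J A \<Longrightarrow> acts_only_on J A"
  unfolding loc_def acts_only_on_def agreeo_def rJ_def by blast

lemma rJ_rJ: "rJ J (rJ J x) = rJ J x"
  unfolding rJ_def by auto

lemma agreeo_rJ: "agreeo J (rJ J x) (rJ J y)"
  unfolding agreeo_def rJ_def by auto

lemma loc_sum: "(\<And>c. c \<in> S \<Longrightarrow> loc J (A c)) \<Longrightarrow> loc J (\<lambda>x y. \<Sum>c\<in>S. A c x y)"
  unfolding loc_def by (auto intro!: sum.neutral)

lemma loc_lincomb: "(\<And>c. c \<in> S \<Longrightarrow> loc J (A c)) \<Longrightarrow> loc J (\<lambda>x y. a * (\<Sum>c\<in>S. g c * A c x y))"
proof -
  assume h: "\<And>c. c \<in> S \<Longrightarrow> loc J (A c)"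
  show ?thesis unfolding loc_def
  proof (intro allI)
    fix x y
    show "a * (\<Sum>c\<in>S. g c * A c x y) = (if agreeo J x y then a * (\<Sum>c\<in>S. g c * A c (rJ J x) (rJ J y)) else 0)"
    proof (cases "agreeo J x y")
      case True
      have "A c x y = A c (rJ J x) (rJ J y)" if "c \<in> S" for c
      proof -
        have "A c x y = (if agreeo J x y then A c (rJ J x) (rJ J y) else 0)"
          using h[OF that] unfolding loc_def by blast
        then show ?thesis using True by simp
      qed
      then show ?thesis using True by simp
    next
      case False
      have "A c x y = 0" if "c \<in> S" for c
      proof -
        have "A c x y = (if agreeo J x y then A c (rJ J x) (rJ J y) else 0)"
          using h[OF that] unfolding loc_def by blast
        then show ?thesis using False by simp
      qed
      then show ?thesis using False by simp
    qed
  qed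
qed

lemma loc_diff: assumes "loc J A" "loc J B" shows "loc J (\<lambda>x y. A x y - B x y)"
  unfolding loc_def
proof (intro allI)
  fix x y
  have "A x y = (if agreeo J x y then A (rJ J x) (rJ J y) else 0)"
       "B x y = (if agreeo J x y then B (rJ J x) (rJ J y) else 0)"
    using assms unfolding loc_def by blast+
  then show "A x y - B x y = (if agreeo J x y then A (rJ J x) (rJ J y) - B (rJ J x) (rJ J y) else 0)"
    by simp
qed

lemma loc_mid: "loc J mid"
  unfolding loc_def mid_def agreeo_def rJ_def by (auto simp: fun_eq_iff)

lemma loc_madj: assumes "loc J A" shows "loc J (madj A)"
  unfolding loc_def
proof (intro allI)
  fix x y
  have "A y x = (if agreeo J y x then A (rJ J y) (rJ J x) else 0)"
    using assms unfolding loc_def by blast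
  moreover have "agreeo J y x = agreeo J x y" unfolding agreeo_def by auto
  ultimately show "madj A x y = (if agreeo J x y then madj A (rJ J x) (rJ J y) else 0)"
    unfolding madj_def by simp
qed

lemma loc_msmult: assumes "loc J A" shows "loc J (msmult c A)"
  unfolding loc_def
proof (intro allI)
  fix x y
  have "A x y = (if agreeo J x y then A (rJ J x) (rJ J y) else 0)"
    using assms unfolding loc_def by blast
  then show "msmult c A x y = (if agreeo J x y then msmult c A (rJ J x) (rJ J y) else 0)"
    unfolding msmult_def by simp
qed

lemma loc_E:
  assumes "\<forall>j. j \<notin> J \<longrightarrow> fst u j = 0 \<and> snd u j = 0"
  shows "loc J (Eop (u :: ('n::finite \<Rightarrow> 'a::{finite,field}) \<times> ('n \<Rightarrow> 'a)))"
  unfolding loc_def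
proof (intro allI)
  fix x y :: "'n \<Rightarrow> 'a"
  have d: "dotp (snd u) (rJ J y) = dotp (snd u) y"
    unfolding dotp_def rJ_def using assms by (intro sum.cong) auto
  show "Eop u x y = (if agreeo J x y then Eop u (rJ J x) (rJ J y) else 0)"
  proof (cases "agreeo J x y")
    case True
    have "(x = (\<lambda>j. y j + fst u j)) = (rJ J x = (\<lambda>j. rJ J y j + fst u j))"
    proof
      assume "x = (\<lambda>j. y j + fst u j)"
      then show "rJ J x = (\<lambda>j. rJ J y j + fst u j)" using assms unfolding rJ_def by auto
    next
      assume h: "rJ J x = (\<lambda>j. rJ J y j + fst u j)"
      show "x = (\<lambda>j. y j + fst u j)"
      proof
        fix j
        show "x j = y j + fst u j"
        proof (cases "j \<in> J")
          case True then show ?thesis using fun_cong[OF h, of j] unfolding rJ_def by simp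
        next
          case False then show ?thesis using \<open>agreeo J x y\<close> assms unfolding agreeo_def by simp
        qed
      qed
    qed
    then show ?thesis using True unfolding Eop_entry d by simp
  next
    case False
    then have "x \<noteq> (\<lambda>j. y j + fst u j)" using assms unfolding agreeo_def by auto
    then show ?thesis using False unfolding Eop_entry by simp
  qed
qed

lemma loc_mmult:
  fixes A B :: "('n::finite \<Rightarrow> 'a::{finite,field}) mat"
  assumes A: "loc J A" and B: "loc J B"
  shows "loc J (mmult A B)"
  unfolding loc_def
proof (intro allI)
  fix x y :: "'n \<Rightarrow> 'a"
  let ?W = "{w::'n \<Rightarrow> 'a. \<forall>j. j \<notin> J \<longrightarrow> w j = 0}"
  have Ae: "A x z = (if agreeo J x z then A (rJ J x) (rJ J z) else 0)" for x z using A unfolding loc_def by blast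
  have Be: "B x z = (if agreeo J x z then B (rJ J x) (rJ J z) else 0)" for x z using B unfolding loc_def by blast
  have agtr: "agreeo J a b \<Longrightarrow> agreeo J b c \<Longrightarrow> agreeo J a c" for a b c :: "'n \<Rightarrow> 'a"
    unfolding agreeo_def by auto
  have agsym: "agreeo J a b \<Longrightarrow> agreeo J b a" for a b :: "'n \<Rightarrow> 'a"
    unfolding agreeo_def by auto
  have key: "(\<Sum>z\<in>UNIV. if agreeo J x0 z then g (rJ J z) else 0) = (\<Sum>w\<in>?W. g w)" for x0 :: "'n \<Rightarrow> 'a" and g :: "('n \<Rightarrow> 'a) \<Rightarrow> complex"
  proof -
    have "(\<Sum>z\<in>UNIV. if agreeo J x0 z then g (rJ J z) else 0) = (\<Sum>z\<in>{z. agreeo J x0 z}. g (rJ J z))"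
      by (simp add: sum.If_cases)
    also have "\<dots> = (\<Sum>w\<in>?W. g w)"
      by (rule sum.reindex_bij_witness[of _ "\<lambda>w j. if j \<in> J then w j else x0 j" "rJ J"])
         (auto simp: agreeo_def rJ_def)
    finally show ?thesis .
  qed
  show "mmult A B x y = (if agreeo J x y then mmult A B (rJ J x) (rJ J y) else 0)"
  proof (cases "agreeo J x y")
    case False
    have h0: "A x z * B z y = 0" for z
      using Ae[of x z] Be[of z y] agtr[of x z y] False by auto
    show ?thesis using False unfolding mmult_def h0 by simp
  next
    case True
    let ?g = "\<lambda>w. A (rJ J x) w * B w (rJ J y)"
    have "mmult A B x y = (\<Sum>z\<in>UNIV. if agreeo J x z then ?g (rJ J z) else 0)"
      unfolding mmult_def
    proof (rule sum.cong)
      fix z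
      show "A x z * B z y = (if agreeo J x z then ?g (rJ J z) else 0)"
      proof (cases "agreeo J x z")
        case True
        then have "agreeo J z y" using agtr agsym \<open>agreeo J x y\<close> by blast
        then show ?thesis using True Ae[of x z] Be[of z y] by simp
      qed (simp add: Ae[of x z])
    qed simp
    also have "\<dots> = (\<Sum>w\<in>?W. ?g w)" by (rule key)
    also have "\<dots> = (\<Sum>z\<in>UNIV. if agreeo J (rJ J x) z then ?g (rJ J z) else 0)" by (rule key[symmetric])
    also have "\<dots> = mmult A B (rJ J x) (rJ J y)"
      unfolding mmult_def
    proof (rule sum.cong)
      fix z
      show "(if agreeo J (rJ J x) z then ?g (rJ J z) else 0) = A (rJ J x) z * B z (rJ J y)"
      proof (cases "agreeo J (rJ J x) z")
        case True
        then have "agreeo J z (rJ J y)" using agtr agsym agreeo_rJ[of J x y] by blast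
        then show ?thesis using True Ae[of "rJ J x" z] Be[of z "rJ J y"] by (simp add: rJ_rJ)
      qed (simp add: Ae[of "rJ J x" z])
    qed simp
    finally show ?thesis using True by simp
  qed
qed


type_synonym ('n, 'a) sv = "('n \<Rightarrow> 'a) \<times> ('n \<Rightarrow> 'a)"

abbreviation vzero :: "('n, 'a::zero) sv" where "vzero \<equiv> (\<lambda>_. 0, \<lambda>_. 0)"

lemma lin_zero: "Fq_linear W \<Longrightarrow> vzero \<in> W"
  unfolding Fq_linear_def by blast

lemma lin_add: "Fq_linear W \<Longrightarrow> u \<in> W \<Longrightarrow> w \<in> W \<Longrightarrow> vadd u w \<in> W"
  unfolding Fq_linear_def vadd_def by blast

lemma lin_smul: "Fq_linear W \<Longrightarrow> u \<in> W \<Longrightarrow> vsmul c u \<in> W"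
  unfolding Fq_linear_def vsmul_def by blast

lemma vneg_smul: "vneg u = vsmul (-1) u"
  unfolding vneg_def vsmul_def by simp

lemma lin_neg: "Fq_linear W \<Longrightarrow> u \<in> W \<Longrightarrow> vneg u \<in> W"
  unfolding vneg_smul by (rule lin_smul)

lemma vadd_assoc: "vadd (vadd u v) w = vadd u (vadd v w)"
  unfolding vadd_def by (simp add: add.assoc)

lemma vadd_zero: "vadd u vzero = u"
  unfolding vadd_def by simp

lemma vadd_neg_cancel: "vadd (vadd u w) (vneg w) = u" "vadd (vadd u (vneg w)) w = u"
  unfolding vadd_def vneg_def by simp_all

lemma char_sum:
  fixes W :: "('n::finite, 'a::{finite,field}) sv set" and L :: "('n, 'a) sv \<Rightarrow> 'a"
  assumes lin: "Fq_linear W"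
    and Ladd: "\<And>u w. u \<in> W \<Longrightarrow> w \<in> W \<Longrightarrow> L (vadd u w) = L u + L w"
    and Lsmul: "\<And>c u. u \<in> W \<Longrightarrow> L (vsmul c u) = c * L u"
  shows "(\<Sum>w\<in>W. omega (L w)) = (if \<forall>w\<in>W. L w = 0 then of_nat (card W) else 0)"
proof (cases "\<forall>w\<in>W. L w = 0")
  case True
  then show ?thesis by (simp add: omega_zero)
next
  case False
  then obtain w0 where w0: "w0 \<in> W" "L w0 \<noteq> 0" by blast
  obtain t :: 'a where t: "omega t \<noteq> 1" using omega_nontriv by blast
  define w1 where "w1 = vsmul (t / L w0) w0"
  have w1W: "w1 \<in> W" unfolding w1_def by (rule lin_smul[OF lin w0(1)])
  have Lw1: "L w1 = t" unfolding w1_def using Lsmul[OF w0(1)] w0(2) by simp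
  have "(\<Sum>w\<in>W. omega (L w)) = (\<Sum>w\<in>W. omega (L (vadd w w1)))"
    by (rule sum.reindex_bij_witness[of _ "\<lambda>w. vadd w w1" "\<lambda>w. vadd w (vneg w1)"])
       (auto simp: vadd_neg_cancel intro: lin_add[OF lin] lin_neg[OF lin] w1W)
  also have "\<dots> = (\<Sum>w\<in>W. omega t * omega (L w))"
    by (rule sum.cong) (auto simp: Ladd w1W Lw1 omega_add mult.commute)
  also have "\<dots> = omega t * (\<Sum>w\<in>W. omega (L w))" by (simp add: sum_distrib_left)
  finally have "(1 - omega t) * (\<Sum>w\<in>W. omega (L w)) = 0" by (simp add: algebra_simps)
  then have "(\<Sum>w\<in>W. omega (L w)) = 0" using t by simp
  then show ?thesis using False by (simp only: if_False)
qed

lemma symp_add_left: "symp (vadd u w) x = symp u x + symp w x"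
  unfolding symp_def vadd_def by (simp add: distrib_right sum.distrib)

lemma symp_add_right: "symp x (vadd u w) = symp x u + symp x w"
  unfolding symp_def vadd_def by (simp add: distrib_left sum.distrib)

lemma symp_smul_left: "symp (vsmul c u) x = c * symp u x"
  unfolding symp_def vsmul_def by (simp add: sum_distrib_left right_diff_distrib mult.assoc)

lemma symp_smul_right: "symp x (vsmul c u) = c * symp x u"
  unfolding symp_def vsmul_def by (simp add: sum_distrib_left right_diff_distrib mult_ac)

lemma symp_neg_left: "symp (vneg u) x = - symp u x"
  unfolding vneg_smul symp_smul_left by simp

lemma symp_neg_right: "symp x (vneg u) = - symp x u"
  unfolding vneg_smul symp_smul_right by simp

lemma symp_antisym: "symp u w = - symp w u"
  unfolding symp_def by (simp add: mult.commute)

definition VS :: "'n set \<Rightarrow> ('n, 'a::zero) sv set" where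
  "VS S = {ab. \<forall>j. j \<notin> S \<longrightarrow> fst ab j = 0 \<and> snd ab j = 0}"

definition restr :: "'n set \<Rightarrow> ('n, 'a::zero) sv \<Rightarrow> ('n, 'a) sv" where
  "restr S v = (\<lambda>j. if j \<in> S then fst v j else 0, \<lambda>j. if j \<in> S then snd v j else 0)"

lemma Fq_linear_VS: "Fq_linear (VS S :: ('n, 'a::field) sv set)"
  unfolding Fq_linear_def VS_def by auto

lemma Fq_linear_inter: "Fq_linear A \<Longrightarrow> Fq_linear B \<Longrightarrow> Fq_linear (A \<inter> B)"
  unfolding Fq_linear_def by blast

lemma restr_vadd: "restr S (vadd u w) = vadd (restr S u) (restr S w)"
  unfolding restr_def vadd_def by auto

lemma restr_vsmul: "restr S (vsmul c u) = vsmul c (restr S u)"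
  unfolding restr_def vsmul_def by auto

lemma Fq_linear_restr: "Fq_linear C \<Longrightarrow> Fq_linear (restr S ` (C :: ('n, 'a::field) sv set))"
proof -
  assume lin: "Fq_linear C"
  have "restr S vzero = (vzero :: ('n, 'a) sv)" unfolding restr_def by auto
  then have z: "vzero \<in> restr S ` C" using lin_zero[OF lin] by (metis image_eqI)
  have a: "vadd u w \<in> restr S ` C" if "u \<in> restr S ` C" "w \<in> restr S ` C" for u w
    using that lin_add[OF lin] by (auto simp: restr_vadd[symmetric])
  have s: "vsmul c u \<in> restr S ` C" if "u \<in> restr S ` C" for u c
    using that lin_smul[OF lin] by (auto simp: restr_vsmul[symmetric])
  show ?thesis unfolding Fq_linear_def using z a[unfolded vadd_def] s[unfolded vsmul_def] by blast
qed

lemma restr_VS: "restr S v \<in> VS S"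
  unfolding restr_def VS_def by auto

lemma symp_restr: "x \<in> VS S \<Longrightarrow> symp (restr S c) x = symp (c::('n::finite, 'a::field) sv) x"
  unfolding symp_def restr_def VS_def
  by (intro arg_cong2[where f = minus] sum.cong) auto

lemma VS_nondeg:
  fixes w :: "('n::finite, 'a::field) sv"
  assumes w: "w \<in> VS S" and h: "\<forall>x\<in>VS S. symp w x = 0"
  shows "w = vzero"
proof -
  have "fst w j = 0 \<and> snd w j = 0" for j
  proof (cases "j \<in> S")
    case False then show ?thesis using w by (auto simp: VS_def)
  next
    case True
    define d where "d = (\<lambda>i. if i = j then (1::'a) else 0)"
    have x1: "((\<lambda>_. 0), d) \<in> VS S" "(d, (\<lambda>_. 0)) \<in> VS S" using True by (auto simp: VS_def d_def)
    have "symp w ((\<lambda>_. 0), d) = fst w j" unfolding symp_def d_def by (simp add: if_distrib cong: if_cong)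
    moreover have "symp w (d, (\<lambda>_. 0)) = - snd w j" unfolding symp_def d_def by (simp add: if_distrib cong: if_cong)
    ultimately show ?thesis using h x1 by auto
  qed
  then show ?thesis by (simp add: prod_eq_iff fun_eq_iff)
qed


lemma symp_zero_right: "symp u vzero = (0::'a::field)"
  unfolding symp_def by simp

lemma coding:
  fixes C :: "('n::finite, 'a::{finite,field}) sv set" and I J :: "'n set"
  assumes lin: "Fq_linear C" and IJ: "I \<subseteq> J"
    and bound: "int (card J) \<ge> int CARD('n) - int (swt (symp_dual C)) + int (card I) + 1"
    and g: "g \<in> VS I" "g \<noteq> vzero"
  shows "\<exists>c\<in>C \<inter> VS J. symp c g \<noteq> 0"
proof -
  define A where "A = I \<union> (UNIV - J)"
  have "card A = card I + card (UNIV - J)"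
    unfolding A_def using IJ by (intro card_Un_disjoint) auto
  also have "card (UNIV - J) = CARD('n) - card J" by (simp add: card_Diff_subset)
  finally have cardA: "card A = card I + (CARD('n) - card J)" .
  have "card J \<le> CARD('n)" by (rule card_mono) auto
  then have Alt: "card A < swt (symp_dual C)" using bound cardA by linarith
  have step1: "x = vzero" if x: "x \<in> VS A" "\<forall>c\<in>C. symp c x = 0" for x
  proof (rule ccontr)
    assume nz: "x \<noteq> vzero"
    have xd: "x \<in> symp_dual C" using x unfolding symp_dual_def by auto
    have fin: "finite {swt_vec v |v. v \<in> symp_dual C \<and> v \<noteq> vzero}"
      by (rule finite_subset[of _ "swt_vec ` UNIV"]) auto
    have "swt (symp_dual C) \<le> swt_vec x"
      unfolding swt_def by (rule Min_le[OF fin]) (use xd nz in blast)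
    also have "swt_vec x \<le> card A"
      unfolding swt_vec_def by (rule card_mono) (use x in \<open>auto simp: VS_def\<close>)
    finally show False using Alt by simp
  qed
  define W where "W = restr A ` C"
  have linW: "Fq_linear W" unfolding W_def by (rule Fq_linear_restr[OF lin])
  have WA: "W \<subseteq> VS A" unfolding W_def using restr_VS by blast
  have z1: "(vzero :: ('n, 'a) sv) \<in> VS A" "vzero \<in> W" using lin_zero[OF linW] by (auto simp: VS_def)
  have inner1: "(\<Sum>w\<in>W. omega (symp w x)) = (if x = vzero then of_nat (card W) else 0)"
    if x: "x \<in> VS A" for x
  proof -
    have "(\<Sum>w\<in>W. omega (symp w x)) = (if \<forall>w\<in>W. symp w x = 0 then of_nat (card W) else 0)"
      by (rule char_sum[OF linW]) (simp_all add: symp_add_left symp_smul_left)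
    moreover have "(\<forall>w\<in>W. symp w x = 0) \<longleftrightarrow> x = vzero"
    proof
      assume "\<forall>w\<in>W. symp w x = 0"
      then have "\<forall>c\<in>C. symp c x = 0" unfolding W_def using symp_restr[OF x] by auto
      then show "x = vzero" using step1 x by blast
    qed (simp add: symp_zero_right)
    ultimately show ?thesis by simp
  qed
  have inner2: "(\<Sum>x\<in>VS A. omega (symp w x)) = (if w = vzero then of_nat (card (VS A :: ('n, 'a) sv set)) else 0)"
    if w: "w \<in> W" for w
  proof -
    have "(\<Sum>x\<in>VS A. omega (symp w x)) = (if \<forall>x\<in>VS A. symp w x = 0 then of_nat (card (VS A :: ('n, 'a) sv set)) else 0)"
      by (rule char_sum[OF Fq_linear_VS]) (simp_all add: symp_add_right symp_smul_right)
    moreover have "(\<forall>x\<in>VS A. symp w x = 0) \<longleftrightarrow> w = vzero"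
      using VS_nondeg[of w A] w WA by (auto simp: symp_def)
    ultimately show ?thesis by simp
  qed
  have "(\<Sum>x\<in>VS A. \<Sum>w\<in>W. omega (symp w x)) = (\<Sum>x\<in>VS A. if x = (vzero :: ('n, 'a) sv) then of_nat (card W) else 0)"
    by (rule sum.cong) (auto simp: inner1)
  also have "\<dots> = of_nat (card W)" using z1 by simp
  finally have D1: "(\<Sum>x\<in>VS A. \<Sum>w\<in>W. omega (symp w x)) = of_nat (card W)" .
  have "(\<Sum>w\<in>W. \<Sum>x\<in>VS A. omega (symp w x)) = (\<Sum>w\<in>W. if w = vzero then of_nat (card (VS A :: ('n, 'a) sv set)) else 0)"
    by (rule sum.cong) (auto simp: inner2)
  also have "\<dots> = of_nat (card (VS A :: ('n, 'a) sv set))" using z1 by simp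
  finally have D2: "(\<Sum>w\<in>W. \<Sum>x\<in>VS A. omega (symp w x)) = of_nat (card (VS A :: ('n, 'a) sv set))" .
  have "(\<Sum>x\<in>VS A. \<Sum>w\<in>W. omega (symp w x)) = (\<Sum>w\<in>W. \<Sum>x\<in>VS A. omega (symp w x))"
    by (rule sum.swap)
  then have "(of_nat (card W) :: complex) = of_nat (card (VS A :: ('n, 'a) sv set))" using D1 D2 by simp
  then have "card W = card (VS A :: ('n, 'a) sv set)" using of_nat_eq_iff by blast
  then have WeqA: "W = VS A" by (intro card_subset_eq[OF _ WA]) auto
  obtain h where h: "h \<in> VS I" "symp g h \<noteq> 0"
    using VS_nondeg[OF g(1)] g(2) by blast
  have "h \<in> VS A" using h(1) unfolding VS_def A_def by auto
  then have "h \<in> restr A ` C" using WeqA unfolding W_def by simp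
  then obtain c where c: "c \<in> C" "h = restr A c" by blast
  have cJ: "c \<in> VS J"
    unfolding VS_def
  proof (intro CollectI allI impI)
    fix j assume "j \<notin> J"
    then have "j \<in> A" "j \<notin> I" using IJ unfolding A_def by auto
    then show "fst c j = 0 \<and> snd c j = 0"
      using h(1) c(2) unfolding VS_def restr_def by (auto dest!: spec[of _ j] simp: prod_eq_iff)
  qed
  have gA: "g \<in> VS A" using g(1) unfolding VS_def A_def by auto
  have "symp c g = symp h g" using symp_restr[OF gA, of c] c(2) by simp
  also have "\<dots> = - symp g h" by (rule symp_antisym)
  finally have "symp c g \<noteq> 0" using h(2) by simp
  then show ?thesis using c(1) cJ by blast
qed


lemma vec_cancel:
  assumes "v \<noteq> (\<lambda>_. 0)" "(\<lambda>x. a * v x) = (\<lambda>x. b * (v x :: complex))"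
  shows "a = b"
proof -
  obtain x where "v x \<noteq> 0" using assms(1) by auto
  moreover have "a * v x = b * v x" using fun_cong[OF assms(2), of x] by simp
  ultimately show ?thesis by simp
qed

lemma cnj_mult_self: "norm (z::complex) = 1 \<Longrightarrow> cnj z * z = 1"
proof -
  assume "norm z = 1"
  moreover have "z * cnj z = of_real ((norm z)^2)" by (rule complex_norm_square[symmetric])
  ultimately show ?thesis by (simp add: mult.commute)
qed

locale QS =
  fixes C :: "('n::finite, 'a::{finite,field}) sv set" and I J :: "'n set"
    and lam :: "('n \<Rightarrow> 'a) mat \<Rightarrow> complex" and v0 :: "('n \<Rightarrow> 'a) \<Rightarrow> complex"
  assumes lin: "Fq_linear C" and IJ: "I \<subseteq> J"
    and bound: "int (card J) \<ge> int CARD('n) - int (swt (symp_dual C)) + int (card I) + 1"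
    and v0Q: "v0 \<in> stab_code C lam" and v0nz: "v0 \<noteq> (\<lambda>_. 0)"
begin

definition lm :: "('n, 'a) sv \<Rightarrow> complex" where "lm c = lam (Eop c)"

lemma eig: "v \<in> stab_code C lam \<Longrightarrow> c \<in> C \<Longrightarrow> mvec (Eop c) v = (\<lambda>x. lm c * v x)"
  unfolding stab_code_def lm_def using stab_group.gen by blast

lemma lm_norm: "c \<in> C \<Longrightarrow> norm (lm c) = 1"
proof -
  assume c: "c \<in> C"
  let ?S = "\<Sum>x\<in>UNIV. (norm (v0 x))^2"
  have "(\<Sum>x\<in>UNIV. (norm (lm c * v0 x))^2) = ?S"
    using E_norm[of c v0] eig[OF v0Q c] by simp
  then have "(norm (lm c))^2 * ?S = ?S" by (simp add: norm_mult power_mult_distrib sum_distrib_left)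
  moreover have "?S \<noteq> 0"
  proof
    assume "?S = 0"
    then have "\<forall>x\<in>UNIV. (norm (v0 x))^2 = 0" by (subst (asm) sum_nonneg_eq_0_iff) auto
    then show False using v0nz by auto
  qed
  ultimately have "(norm (lm c))^2 = 1" by simp
  then show ?thesis using norm_ge_zero[of "lm c"] by (auto simp: power2_eq_1_iff)
qed

lemma lm_cnj: "c \<in> C \<Longrightarrow> cnj (lm c) * lm c = 1"
  by (rule cnj_mult_self[OF lm_norm])

lemma lm_zero: "lm vzero = 1"
proof -
  have "mvec (Eop vzero) v0 = (\<lambda>x. lm vzero * v0 x)" by (rule eig[OF v0Q lin_zero[OF lin]])
  then have "(\<lambda>x. lm vzero * v0 x) = (\<lambda>x. 1 * v0 x)" by (simp add: E_zero mvec_mid)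
  then show ?thesis by (rule vec_cancel[OF v0nz])
qed

lemma lm_mult: "c \<in> C \<Longrightarrow> c' \<in> C \<Longrightarrow> lm c * lm c' = omega (dotp (snd c) (fst c')) * lm (vadd c c')"
proof -
  assume c: "c \<in> C" and c': "c' \<in> C"
  have "mvec (mmult (Eop c) (Eop c')) v0 = (\<lambda>x. (lm c * lm c') * v0 x)"
    unfolding mvec_mmult eig[OF v0Q c'] mvec_scal eig[OF v0Q c] by (simp add: mult_ac)
  moreover have "mvec (mmult (Eop c) (Eop c')) v0 = (\<lambda>x. (omega (dotp (snd c) (fst c')) * lm (vadd c c')) * v0 x)"
    unfolding E_mult mvec_msmult eig[OF v0Q lin_add[OF lin c c']] by (simp add: mult_ac)
  ultimately show ?thesis using vec_cancel[OF v0nz] by metis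
qed

definition U :: "('n, 'a) sv \<Rightarrow> ('n \<Rightarrow> 'a) mat" where
  "U c = msmult (cnj (lm c)) (Eop c)"

lemma U_mult: "c \<in> C \<Longrightarrow> c' \<in> C \<Longrightarrow> mmult (U c) (U c') = U (vadd c c')"
proof -
  assume c: "c \<in> C" and c': "c' \<in> C"
  have "mmult (U c) (U c') = msmult (cnj (lm c) * cnj (lm c') * omega (dotp (snd c) (fst c'))) (Eop (vadd c c'))"
    unfolding U_def mmult_msmult_left mmult_msmult_right E_mult msmult_msmult by (simp add: mult_ac)
  also have "cnj (lm c) * cnj (lm c') = cnj (omega (dotp (snd c) (fst c'))) * cnj (lm (vadd c c'))"
    using arg_cong[OF lm_mult[OF c c'], of cnj] by simp
  finally show ?thesis unfolding U_def
    using omega_cnj_mult[of "dotp (snd c) (fst c')"] by (simp add: mult_ac)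
qed

lemma U_adj: "c \<in> C \<Longrightarrow> madj (U c) = U (vneg c)"
proof -
  assume c: "c \<in> C"
  let ?d = "dotp (snd c) (fst c)"
  have nc: "vneg c \<in> C" by (rule lin_neg[OF lin c])
  have "lm c * lm (vneg c) = omega (dotp (snd c) (fst (vneg c))) * lm (vadd c (vneg c))"
    by (rule lm_mult[OF c nc])
  also have "\<dots> = cnj (omega ?d)"
  proof -
    have "lm (vadd c (vneg c)) = 1" by (simp only: vadd_vneg lm_zero)
    moreover have "dotp (snd c) (fst (vneg c)) = - ?d" by (simp add: vneg_def dotp_neg_right)
    ultimately show ?thesis by (simp add: omega_neg)
  qed
  finally have "cnj (lm c) * (lm c * lm (vneg c)) = cnj (lm c) * cnj (omega ?d)" by simp
  then have "lm (vneg c) = cnj (lm c) * cnj (omega ?d)"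
    using lm_cnj[OF c] by (simp add: mult.assoc[symmetric])
  then have "cnj (lm (vneg c)) = lm c * omega ?d" by simp
  then show ?thesis unfolding U_def madj_msmult E_adj msmult_msmult by simp
qed

lemma U_fix: "v \<in> stab_code C lam \<Longrightarrow> c \<in> C \<Longrightarrow> mvec (U c) v = v"
  unfolding U_def mvec_msmult using lm_cnj by (simp add: eig mult.assoc[symmetric])

lemma symp_dotp: "symp c e = dotp (fst c) (snd e) - dotp (snd c) (fst e)"
  unfolding symp_def dotp_def ..

lemma U_comm: "mmult (U c) (Eop e) = msmult (omega (- symp c e)) (mmult (Eop e) (U c))"
proof -
  have "omega (- symp c e) * omega (dotp (snd e) (fst c)) = omega (dotp (snd c) (fst e))"
    unfolding omega_add[symmetric] symp_dotp by (simp add: dotp_comm[of "snd e"])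
  then show ?thesis
    unfolding U_def mmult_msmult_left mmult_msmult_right E_mult msmult_msmult
    by (simp add: vadd_comm[of e] mult_ac)
qed

lemma U_loc: "c \<in> VS J \<Longrightarrow> loc J (U c)"
  unfolding U_def VS_def by (intro loc_msmult loc_E) simp

abbreviation CJ :: "('n, 'a) sv set" where "CJ \<equiv> C \<inter> VS J"
abbreviation N :: nat where "N \<equiv> card CJ"

lemma linCJ: "Fq_linear CJ" by (rule Fq_linear_inter[OF lin Fq_linear_VS])

lemma CJ_ne: "CJ \<noteq> {}"
  using lin_zero[OF linCJ] by blast

lemma N_pos: "N > 0"
  using CJ_ne by (simp add: card_gt_0_iff)

lemma char_CJ:
  assumes g: "g \<in> VS I"
  shows "(\<Sum>c\<in>CJ. omega (symp c g)) = (if g = vzero then of_nat N else 0)"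
proof -
  have "(\<Sum>c\<in>CJ. omega (symp c g)) = (if \<forall>c\<in>CJ. symp c g = 0 then of_nat N else 0)"
    by (rule char_sum[OF linCJ]) (simp_all add: symp_add_left symp_smul_left)
  moreover have "(\<forall>c\<in>CJ. symp c g = 0) \<longleftrightarrow> g = vzero"
    using coding[OF lin IJ bound g] by (auto simp: symp_zero_right)
  ultimately show ?thesis by simp
qed

definition chi :: "('n, 'a) sv \<Rightarrow> ('n, 'a) sv \<Rightarrow> complex" where
  "chi f c = omega (symp c f)"

definition P :: "('n, 'a) sv \<Rightarrow> ('n \<Rightarrow> 'a) mat" where
  "P f = (\<lambda>x y. (1 / of_nat N) * (\<Sum>c\<in>CJ. chi f c * U c x y))"

lemma P_loc: "loc J (P f)"
  unfolding P_def by (rule loc_lincomb) (simp add: U_loc)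

lemma vsub_VS: "f \<in> VS I \<Longrightarrow> e \<in> VS I \<Longrightarrow> vadd f (vneg e) \<in> VS I"
  by (intro lin_add[OF Fq_linear_VS] lin_neg[OF Fq_linear_VS])

lemma vsub_zero: "vadd f (vneg e) = vzero \<longleftrightarrow> f = e"
  unfolding vadd_def vneg_def by (auto simp: fun_eq_iff prod_eq_iff)

lemma chi_diff: "chi f c * omega (- symp c e) = omega (symp c (vadd f (vneg e)))"
  unfolding chi_def symp_add_right symp_neg_right omega_add ..

lemma P_err:
  assumes v: "v \<in> stab_code C lam" and e: "e \<in> VS I" and f: "f \<in> VS I"
  shows "mvec (P f) (mvec (Eop e) v) = (if f = e then mvec (Eop e) v else (\<lambda>_. 0))"
proof -
  let ?w = "mvec (Eop e) v"
  have Uw: "mvec (U c) ?w = (\<lambda>x. omega (- symp c e) * ?w x)" if "c \<in> CJ" for c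
  proof -
    have "mvec (U c) ?w = mvec (mmult (U c) (Eop e)) v" by (simp add: mvec_mmult)
    also have "\<dots> = (\<lambda>x. omega (- symp c e) * ?w x)"
      unfolding U_comm mvec_msmult mvec_mmult U_fix[OF v] using that U_fix[OF v] by simp
    finally show ?thesis .
  qed
  have "mvec (P f) ?w = (\<lambda>x. (1 / of_nat N) * (\<Sum>c\<in>CJ. chi f c * mvec (U c) ?w x))"
    unfolding P_def by (rule mvec_lincomb)
  also have "\<dots> = (\<lambda>x. (1 / of_nat N) * (\<Sum>c\<in>CJ. omega (symp c (vadd f (vneg e)))) * ?w x)"
  proof (rule ext)
    fix x
    have "(\<Sum>c\<in>CJ. chi f c * mvec (U c) ?w x) = (\<Sum>c\<in>CJ. omega (symp c (vadd f (vneg e))) * ?w x)"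
      by (rule sum.cong) (simp_all add: Uw chi_diff[symmetric] mult.assoc)
    then show "(1 / of_nat N) * (\<Sum>c\<in>CJ. chi f c * mvec (U c) ?w x) =
      (1 / of_nat N) * (\<Sum>c\<in>CJ. omega (symp c (vadd f (vneg e)))) * ?w x"
      by (simp add: sum_distrib_right)
  qed
  also have "\<dots> = (if f = e then ?w else (\<lambda>_. 0))"
    unfolding char_CJ[OF vsub_VS[OF f e]] vsub_zero using N_pos CJ_ne by auto
  finally show ?thesis .
qed

end


context QS
begin

lemma vneg_vneg: "vneg (vneg c) = c"
  unfolding vneg_def by simp

lemma vneg_CJ: "c \<in> CJ \<Longrightarrow> vneg c \<in> CJ"
  using lin_neg[OF linCJ] by blast

lemma vneg_C: "c \<in> C \<Longrightarrow> vneg c \<in> C" by (rule lin_neg[OF lin])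
lemma vadd_C: "c \<in> C \<Longrightarrow> d \<in> C \<Longrightarrow> vadd c d \<in> C" by (rule lin_add[OF lin])
lemma vneg_VSJ: "c \<in> VS J \<Longrightarrow> vneg c \<in> VS J" by (rule lin_neg[OF Fq_linear_VS])
lemma vadd_VSJ: "c \<in> VS J \<Longrightarrow> d \<in> VS J \<Longrightarrow> vadd c d \<in> VS J" by (rule lin_add[OF Fq_linear_VS])

lemma sum_CJ_neg: "(\<Sum>c\<in>CJ. G (vneg c)) = (\<Sum>c\<in>CJ. G c)"
  by (rule sum.reindex_bij_witness[of _ vneg vneg]) (auto simp: vneg_vneg intro: vneg_C vneg_VSJ)

lemma P_herm_entry: "cnj (P f y x) = P f x y"
proof -
  have "cnj (P f y x) = (1 / of_nat N) * (\<Sum>c\<in>CJ. cnj (chi f c) * cnj (U c y x))"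
    unfolding P_def by simp
  also have "\<dots> = (1 / of_nat N) * (\<Sum>c\<in>CJ. chi f (vneg c) * U (vneg c) x y)"
  proof -
    have "cnj (chi f c) * cnj (U c y x) = chi f (vneg c) * U (vneg c) x y" if "c \<in> CJ" for c
    proof -
      have "cnj (U c y x) = U (vneg c) x y"
        using U_adj[of c] that unfolding madj_def by (metis IntD1)
      moreover have "cnj (chi f c) = chi f (vneg c)"
        unfolding chi_def symp_neg_left omega_neg ..
      ultimately show ?thesis by simp
    qed
    then have "(\<Sum>c\<in>CJ. cnj (chi f c) * cnj (U c y x)) = (\<Sum>c\<in>CJ. chi f (vneg c) * U (vneg c) x y)"
      by (rule sum.cong[OF refl])
    then show ?thesis by simp
  qed
  also have "\<dots> = P f x y" unfolding P_def sum_CJ_neg[of "\<lambda>c. chi f c * U c x y"] ..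
  finally show ?thesis .
qed

lemma P_herm: "madj (P f) = P f"
  unfolding madj_def by (intro ext) (rule P_herm_entry)

definition SM :: "('n, 'a) sv \<Rightarrow> ('n \<Rightarrow> 'a) mat" where
  "SM f = (\<lambda>x y. \<Sum>c\<in>CJ. chi f c * U c x y)"

lemma P_SM: "P f = msmult (1 / of_nat N) (SM f)"
  unfolding P_def SM_def msmult_def ..

lemma SM_mult_raw: "mmult (SM f) (SM g) x y = (\<Sum>c\<in>CJ. \<Sum>c'\<in>CJ. chi f c * chi g c' * U (vadd c c') x y)"
proof -
  have SM_alt: "SM h = (\<lambda>x y. \<Sum>c\<in>CJ. msmult (chi h c) (U c) x y)" for h
    unfolding SM_def msmult_def ..
  have "mmult (SM f) (SM g) = (\<lambda>x y. \<Sum>c\<in>CJ. mmult (msmult (chi f c) (U c)) (SM g) x y)"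
    unfolding SM_alt[of f] by (rule mmult_sum_left)
  also have "\<dots> = (\<lambda>x y. \<Sum>c\<in>CJ. chi f c * (\<Sum>c'\<in>CJ. chi g c' * mmult (U c) (U c') x y))"
  proof (intro ext sum.cong refl)
    fix x y c
    have "mmult (U c) (SM g) = (\<lambda>x y. \<Sum>c'\<in>CJ. mmult (U c) (msmult (chi g c') (U c')) x y)"
      unfolding SM_alt[of g] by (rule mmult_sum_right)
    then show "mmult (msmult (chi f c) (U c)) (SM g) x y = chi f c * (\<Sum>c'\<in>CJ. chi g c' * mmult (U c) (U c') x y)"
      unfolding mmult_msmult_left mmult_msmult_right by (simp add: msmult_def)
  qed
  also have "\<dots> = (\<lambda>x y. \<Sum>c\<in>CJ. \<Sum>c'\<in>CJ. chi f c * chi g c' * U (vadd c c') x y)"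
    by (intro ext sum.cong refl) (auto simp: U_mult sum_distrib_left mult.assoc)
  finally show ?thesis by simp
qed

lemma vneg_vadd: "vadd (vneg c) c = vzero"
  unfolding vadd_def vneg_def by simp

lemma chi_shift: "chi g (vadd d (vneg c)) = chi g d * cnj (chi g c)"
  unfolding chi_def symp_add_left symp_neg_left omega_add omega_neg ..

lemma SM_mult: "f \<in> VS I \<Longrightarrow> g \<in> VS I \<Longrightarrow> mmult (SM f) (SM g) = (\<lambda>x y. (if f = g then of_nat N else 0) * SM g x y)"
proof (intro ext)
  fix x y
  assume f: "f \<in> VS I" and g: "g \<in> VS I"
  have inner: "(\<Sum>c'\<in>CJ. chi f c * chi g c' * U (vadd c c') x y) =
     (\<Sum>d\<in>CJ. chi f c * chi g (vadd d (vneg c)) * U d x y)" if c: "c \<in> CJ" for c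
    by (rule sum.reindex_bij_witness[of _ "\<lambda>d. vadd d (vneg c)" "\<lambda>c'. vadd c c'"])
       (use c in \<open>auto simp: vadd_neg_cancel vadd_comm[of c] vadd_assoc vadd_vneg vneg_vadd vadd_zero
         intro: vadd_C vneg_C vadd_VSJ vneg_VSJ\<close>)
  have "mmult (SM f) (SM g) x y = (\<Sum>c\<in>CJ. \<Sum>d\<in>CJ. chi f c * chi g (vadd d (vneg c)) * U d x y)"
    unfolding SM_mult_raw by (rule sum.cong) (simp_all add: inner)
  also have "\<dots> = (\<Sum>c\<in>CJ. \<Sum>d\<in>CJ. (chi f c * cnj (chi g c)) * (chi g d * U d x y))"
    unfolding chi_shift by (simp add: mult_ac)
  also have "\<dots> = (\<Sum>c\<in>CJ. chi f c * cnj (chi g c)) * SM g x y"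
    unfolding SM_def by (simp add: sum_distrib_left sum_distrib_right, rule sum.swap)
  also have "(\<Sum>c\<in>CJ. chi f c * cnj (chi g c)) = (if f = g then of_nat N else 0)"
  proof -
    have "(\<Sum>c\<in>CJ. chi f c * cnj (chi g c)) = (\<Sum>c\<in>CJ. omega (symp c (vadd f (vneg g))))"
      unfolding chi_diff[symmetric] by (simp add: chi_def omega_neg)
    then show ?thesis unfolding char_CJ[OF vsub_VS[OF f g]] vsub_zero .
  qed
  finally show "mmult (SM f) (SM g) x y = (if f = g then of_nat N else 0) * SM g x y" .
qed

lemma P_mult: "f \<in> VS I \<Longrightarrow> g \<in> VS I \<Longrightarrow> mmult (P f) (P g) = (if f = g then P f else (\<lambda>x y. 0))"
proof -
  assume f: "f \<in> VS I" and g: "g \<in> VS I"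
  have "mmult (P f) (P g) = msmult (1 / of_nat N * (1 / of_nat N)) (mmult (SM f) (SM g))"
    unfolding P_SM mmult_msmult_left mmult_msmult_right msmult_msmult ..
  also have "\<dots> = (if f = g then P f else (\<lambda>x y. 0))"
    unfolding SM_mult[OF f g] P_SM using N_pos by (auto simp: msmult_def fun_eq_iff)
  finally show ?thesis .
qed

end


lemma card_zero_outside: "card {f :: 'n::finite \<Rightarrow> 'a::{finite,zero}. \<forall>j. j \<notin> S \<longrightarrow> f j = 0} = CARD('a) ^ card S"
proof -
  let ?F = "{f :: 'n \<Rightarrow> 'a. \<forall>j. j \<notin> S \<longrightarrow> f j = 0}"
  have "bij_betw (\<lambda>f. restrict f S) ?F (PiE S (\<lambda>_. UNIV))"
    by (rule bij_betw_byWitness[where f' = "\<lambda>g j. if j \<in> S then g j else 0"])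
       (auto simp: fun_eq_iff PiE_def extensional_def restrict_def)
  then have "card ?F = card (PiE S (\<lambda>_. (UNIV :: 'a set)))" by (rule bij_betw_same_card)
  also have "\<dots> = CARD('a) ^ card S" by (simp add: card_PiE)
  finally show ?thesis .
qed

lemma card_VS: "card (VS S :: ('n::finite, 'a::{finite,zero}) sv set) = CARD('a) ^ (2 * card S)"
proof -
  have "(VS S :: ('n, 'a) sv set) = {f. \<forall>j. j \<notin> S \<longrightarrow> f j = 0} \<times> {f. \<forall>j. j \<notin> S \<longrightarrow> f j = 0}"
    unfolding VS_def by auto
  then show ?thesis by (simp add: card_cartesian_product card_zero_outside power_mult_distrib mult_2 power_add)
qed

lemma mmult_diff:
  "mmult (\<lambda>x y. A x y - B x y) (\<lambda>x y. C x y - D x y) =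
   (\<lambda>x y. mmult A C x y - mmult A D x y - mmult B C x y + mmult B D x y)"
  for A :: "'b::finite mat"
  unfolding mmult_def by (intro ext) (simp add: algebra_simps sum_subtractf sum.distrib)

context QS
begin

definition Kf :: "('n, 'a) sv \<Rightarrow> ('n \<Rightarrow> 'a) mat" where
  "Kf f = mmult (madj (Eop f)) (P f)"

definition SS :: "('n \<Rightarrow> 'a) mat" where
  "SS = (\<lambda>x y. \<Sum>f\<in>VS I. P f x y)"

definition Krest :: "('n \<Rightarrow> 'a) mat" where
  "Krest = (\<lambda>x y. mid x y - SS x y)"

definition fl :: "('n, 'a) sv list" where
  "fl = (SOME xs. distinct xs \<and> set xs = VS I)"

lemma fl: "distinct fl \<and> set fl = VS I"
proof -
  have "\<exists>xs. distinct xs \<and> set xs = (VS I :: ('n, 'a) sv set)"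
    using finite_distinct_list[of "VS I :: ('n, 'a) sv set"] by auto
  from someI_ex[OF this] show ?thesis unfolding fl_def .
qed

definition Ks :: "('n \<Rightarrow> 'a) mat list" where
  "Ks = map Kf fl @ [Krest]"

lemma Ks_loc: "\<forall>K\<in>set Ks. acts_only_on J K"
proof
  fix K assume "K \<in> set Ks"
  then consider f where "f \<in> VS I" "K = Kf f" | "K = Krest" unfolding Ks_def using fl by auto
  then show "acts_only_on J K"
  proof cases
    case 1
    have "\<forall>j. j \<notin> J \<longrightarrow> fst f j = 0 \<and> snd f j = 0" using 1(1) IJ unfolding VS_def by auto
    then have "loc J (Kf f)" unfolding Kf_def by (intro loc_mmult loc_madj loc_E P_loc)
    then show ?thesis using 1 by (simp add: loc_acts)
  next
    case 2
    have "loc J Krest" unfolding Krest_def SS_def by (intro loc_diff loc_mid loc_sum P_loc)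
    then show ?thesis using 2 by (simp add: loc_acts)
  qed
qed

lemma Kf_gram: "f \<in> VS I \<Longrightarrow> mmult (madj (Kf f)) (Kf f) = P f"
proof -
  assume f: "f \<in> VS I"
  have "mmult (madj (Kf f)) (Kf f) = mmult (P f) (mmult (mmult (Eop f) (madj (Eop f))) (P f))"
    unfolding Kf_def madj_mmult madj_madj P_herm by (simp add: mmult_assoc)
  also have "\<dots> = P f" unfolding E_unitary mmult_mid_left P_mult[OF f f] by simp
  finally show ?thesis .
qed

lemma SS_idem: "mmult SS SS = SS"
proof -
  have "mmult SS SS = (\<lambda>x y. \<Sum>f\<in>VS I. \<Sum>g\<in>VS I. mmult (P f) (P g) x y)"
    unfolding SS_def mmult_sum_left mmult_sum_right ..
  also have "\<dots> = (\<lambda>x y. \<Sum>f\<in>VS I. \<Sum>g\<in>VS I. if f = g then P f x y else 0)"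
    by (intro ext sum.cong refl) (simp add: P_mult)
  also have "\<dots> = SS" unfolding SS_def by simp
  finally show ?thesis .
qed

lemma SS_herm: "madj SS = SS"
  unfolding SS_def madj_def by (simp add: P_herm_entry)

lemma Krest_herm: "madj Krest = Krest"
proof -
  have "madj Krest = (\<lambda>x y. madj mid x y - madj SS x y)" unfolding Krest_def madj_def by simp
  then show ?thesis unfolding madj_mid SS_herm Krest_def .
qed

lemma Krest_gram: "mmult (madj Krest) Krest = Krest"
  unfolding Krest_herm unfolding Krest_def mmult_diff mmult_mid_left mmult_mid_right SS_idem
  by (intro ext) simp

lemma TP: "(\<lambda>x y. \<Sum>K\<leftarrow>Ks. mmult (madj K) K x y) = mid"
proof (intro ext)
  fix x y
  have "(\<Sum>K\<leftarrow>Ks. mmult (madj K) K x y) = (\<Sum>f\<leftarrow>fl. mmult (madj (Kf f)) (Kf f) x y) + mmult (madj Krest) Krest x y"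
    unfolding Ks_def by (simp add: comp_def)
  also have "(\<Sum>f\<leftarrow>fl. mmult (madj (Kf f)) (Kf f) x y) = (\<Sum>f\<in>VS I. mmult (madj (Kf f)) (Kf f) x y)"
    using fl by (simp add: sum_list_distinct_conv_sum_set)
  also have "\<dots> = SS x y" unfolding SS_def by (rule sum.cong) (simp_all add: Kf_gram)
  also have "mmult (madj Krest) Krest x y = Krest x y" by (simp only: Krest_gram)
  finally show "(\<Sum>K\<leftarrow>Ks. mmult (madj K) K x y) = mid x y"
    unfolding Krest_def by simp
qed

lemma mvec_Kf:
  assumes v: "v \<in> stab_code C lam" and e: "e \<in> VS I" and f: "f \<in> VS I"
  shows "mvec (Kf f) (mvec (Eop e) v) = (if f = e then v else (\<lambda>_. 0))"
proof (cases "f = e")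
  case True
  then show ?thesis unfolding Kf_def mvec_mmult P_err[OF v e f]
    by (simp add: mvec_mmult[symmetric] E_unitary' mvec_mid)
next
  case False
  then show ?thesis unfolding Kf_def mvec_mmult P_err[OF v e f] by (simp add: mvec_zero)
qed

lemma mvec_Krest:
  assumes v: "v \<in> stab_code C lam" and e: "e \<in> VS I"
  shows "mvec Krest (mvec (Eop e) v) = (\<lambda>_. 0)"
proof (intro ext)
  fix x
  let ?w = "mvec (Eop e) v"
  have "mvec Krest ?w x = mvec mid ?w x - (\<Sum>f\<in>VS I. mvec (P f) ?w x)"
    unfolding Krest_def SS_def mvec_def
    by (simp add: left_diff_distrib sum_subtractf sum_distrib_right, rule sum.swap)
  also have "(\<Sum>f\<in>VS I. mvec (P f) ?w x) = (\<Sum>f\<in>VS I. if f = e then ?w x else 0)"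
    by (rule sum.cong) (simp_all add: P_err[OF v e])
  also have "\<dots> = ?w x" using e by simp
  finally show "mvec Krest ?w x = 0" by (simp add: mvec_mid)
qed

lemma proj_zero: "proj (\<lambda>_. 0) = (\<lambda>x y. 0)"
  unfolding proj_def by simp

lemma Gamma_proj:
  "Gamma_on I (proj (v :: ('n \<Rightarrow> 'a) \<Rightarrow> complex)) = (\<lambda>x y. (1 / of_nat (CARD('a) ^ (2 * card I))) * (\<Sum>e\<in>VS I. proj (mvec (Eop e) v) x y))"
  unfolding Gamma_on_def msmult_def proj_conj VS_def ..

lemma recover:
  assumes v: "v \<in> stab_code C lam"
  shows "kraus_apply Ks (Gamma_on I (proj v)) = proj v"
proof (intro ext)
  fix x y
  let ?c = "1 / of_nat (CARD('a) ^ (2 * card I)) :: complex"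
  let ?w = "\<lambda>e. mvec (Eop e) v"
  have hterm: "mmult (mmult K (Gamma_on I (proj v))) (madj K) x y = ?c * (\<Sum>e\<in>VS I. proj (mvec K (?w e)) x y)" for K
    unfolding Gamma_proj conj_lincomb proj_conj ..
  have "kraus_apply Ks (Gamma_on I (proj v)) x y =
      (\<Sum>f\<leftarrow>fl. ?c * (\<Sum>e\<in>VS I. proj (mvec (Kf f) (?w e)) x y)) + ?c * (\<Sum>e\<in>VS I. proj (mvec Krest (?w e)) x y)"
    unfolding kraus_apply_def Ks_def hterm by (simp add: comp_def)
  also have "(\<Sum>f\<leftarrow>fl. ?c * (\<Sum>e\<in>VS I. proj (mvec (Kf f) (?w e)) x y)) =
      (\<Sum>f\<in>VS I. ?c * (\<Sum>e\<in>VS I. proj (mvec (Kf f) (?w e)) x y))"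
    using fl by (simp add: sum_list_distinct_conv_sum_set)
  also have "\<dots> = (\<Sum>f\<in>(VS I :: ('n, 'a) sv set). ?c * proj v x y)"
  proof (rule sum.cong[OF refl])
    fix f :: "('n, 'a) sv" assume f: "f \<in> VS I"
    have "(\<Sum>e\<in>VS I. proj (mvec (Kf f) (?w e)) x y) = (\<Sum>e\<in>VS I. if f = e then proj v x y else 0)"
      by (rule sum.cong[OF refl]) (simp add: mvec_Kf[OF v _ f] proj_zero)
    also have "\<dots> = proj v x y" using f by simp
    finally show "?c * (\<Sum>e\<in>VS I. proj (mvec (Kf f) (?w e)) x y) = ?c * proj v x y" by simp
  qed
  also have "(\<Sum>e\<in>VS I. proj (mvec Krest (?w e)) x y) = 0"
    by (rule sum.neutral) (simp add: mvec_Krest[OF v] proj_zero)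
  also have "(\<Sum>f\<in>(VS I :: ('n, 'a) sv set). ?c * proj v x y) = of_nat (card (VS I :: ('n, 'a) sv set)) * ?c * proj v x y"
    by simp
  also have "of_nat (card (VS I :: ('n, 'a) sv set)) * ?c = 1"
    unfolding card_VS by simp
  finally show "kraus_apply Ks (Gamma_on I (proj v)) x y = proj v x y" by simp
qed

lemma result: "locally_recoverable (stab_code C lam) I J"
  unfolding locally_recoverable_def tp_operation_on_def
  using Ks_loc TP recover by blast

end


theorem proposition20:
  fixes C :: "(('n::finite \<Rightarrow> 'a::{finite,field}) \<times> ('n \<Rightarrow> 'a)) set"
    and I J :: "'n set"
    and lam :: "('n \<Rightarrow> 'a) mat \<Rightarrow> complex"
  assumes "Fq_linear C"
    and "C \<subseteq> symp_dual C"
    and "stab_character C lam"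
    and "I \<noteq> {}" and "I \<subset> J"
    and "int (card J) \<ge> int CARD('n) - int (swt (symp_dual C)) + int (card I) + 1"
  shows "locally_recoverable (stab_code C lam) I J"
proof (cases "\<exists>v0\<in>stab_code C lam. v0 \<noteq> (\<lambda>_. 0)")
  case True
  then obtain v0 where v0: "v0 \<in> stab_code C lam" "v0 \<noteq> (\<lambda>_. 0)" by blast
  interpret QS C I J lam v0
    using assms v0 by unfold_locales auto
  show ?thesis by (rule result)
next
  case False
  have tp: "tp_operation_on J [mid]"
    unfolding tp_operation_on_def using loc_acts[OF loc_mid]
    by (simp add: madj_mid mmult_mid_left)
  have "kraus_apply [mid] (Gamma_on I (proj v)) = proj v" if v: "v \<in> stab_code C lam" for v
  proof -
    have v0: "v = (\<lambda>_. 0)" using False v by blast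
    show ?thesis
      unfolding v0 kraus_apply_def Gamma_on_def proj_def mmult_def msmult_def by simp
  qed
  then show ?thesis unfolding locally_recoverable_def using tp by blast
qed


end
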